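(* Let $V$ be a $2n$-dimensional real symplectic vector space, $g\ge2$, $h$ a hyperbolization of $\Gamma_g$, $\rho:\Gamma_g\to\mathrm{Sp}(V)$ a maximal representation and $\phi:S^1\to\mathcal L(V)$ a boundary map for $\rho$ as in the context. Let $\gamma\in\Gamma_g\setminus\{\mathrm{Id}\}$, let $\gamma^+,\gamma^-\in S^1$ be the attracting and repelling fixed points of $h(\gamma)$, and $L_\pm=\phi(\gamma^\pm)$. Then $$\mathrm{T}_\rho(\gamma)=\inf_{J'\in\mathcal Y_{L_-,L_+}}d_{\mathrm{Sp}}(J',\rho(\gamma)J').$$
   Context: $\Gamma_g$ is a closed oriented surface group of genus $g$; a hyperbolization is a discrete faithful cocompact $h:\Gamma_g\to\mathrm{PSL}(2,\mathbb R)$, giving an action of $\Gamma_g$ on $S^1=\partial\mathbb D$. $\mathcal X_{\mathrm{Sp}}=\{J\in\mathrm{GL}(V):J^2=-\mathrm{Id},\ \langle\cdot,J\cdot\rangle\text{ symmetric positive definite}\}$ with $\mathrm{Sp}(V)$ acting by conjugation; $d_{\mathrm{Sp}}(J_1,J_2)=|\log\|\mathrm{Id}\|_{J_1,J_2}|+|\log\|\mathrm{Id}\|_{J_2,J_1}|$ where $\|\mathrm{Id}\|_{J_1,J_2}$ is the operator norm of the identity from $(V,\langle\cdot,J_1\cdot\rangle^{1/2})$ to $(V,\langle\cdot,J_2\cdot\rangle^{1/2})$; $\mathrm{T}_\rho(\gamma)=\inf_{J\in\mathcal X_{\mathrm{Sp}}}d_{\mathrm{Sp}}(J,\rho(\gamma)J)$.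 $\mathcal L(V)$ is the space of Lagrangian subspaces; $L,L'$ are transverse if $L\cap L'=0$. For transverse $L_-,L_+$, $\mathcal Y_{L_-,L_+}=\{J\in\mathcal X_{\mathrm{Sp}}:J(L_\pm)=L_\mp\}$. Maximal representation: Toledo invariant equal to the Milnor–Wood bound $n(g-1)$. A boundary map for $\rho$ is a $\rho$-equivariant continuous map $\phi:S^1\to\mathcal L(V)$ sending distinct points to transverse Lagrangians (such a map exists for maximal $\rho$ by work of Burger–Iozzi–Labourie–Wienhard). *)

theory Defs
  imports "HOL-Analysis.Analysis" "HOL-Algebra.Group"
begin

section \<open>Closed oriented surface group of genus g, via its standard presentation\<close>

text \<open>Generators are indexed by j < 2g: a_i = c (2i), b_i = c (2i+1).
  A letter is (j, True) for c j and (j, False) for its inverse.\<close>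

type_synonym letter = "nat \<times> bool"

definition linv :: "letter \<Rightarrow> letter" where
  "linv l = (fst l, \<not> snd l)"

definition word_inv :: "letter list \<Rightarrow> letter list" where
  "word_inv w = rev (map linv w)"

definition surf_relator :: "nat \<Rightarrow> letter list" where
  "surf_relator g = concat (map (\<lambda>i. [(2*i, True), (2*i+1, True), (2*i, False), (2*i+1, False)]) [0..<g])"

definition word_in :: "nat \<Rightarrow> letter list \<Rightarrow> bool" where
  "word_in g w \<longleftrightarrow> (\<forall>l\<in>set w. fst l < 2*g)"

definition surf_ins :: "nat \<Rightarrow> letter list \<Rightarrow> letter list \<Rightarrow> bool" where
  "surf_ins g w w' \<longleftrightarrow> (\<exists>u v x. w = u @ v \<and> w' = u @ x @ v \<and>
      (x = surf_relator g \<or> x = word_inv (surf_relator g) \<or>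
       (\<exists>l. fst l < 2*g \<and> x = [l, linv l])))"

definition surf_equiv :: "nat \<Rightarrow> letter list \<Rightarrow> letter list \<Rightarrow> bool" where
  "surf_equiv g = (\<lambda>w w'. surf_ins g w w' \<or> surf_ins g w' w)\<^sup>*\<^sup>*"

definition eval_word :: "('g, 'm) monoid_scheme \<Rightarrow> (nat \<Rightarrow> 'g) \<Rightarrow> letter list \<Rightarrow> 'g" where
  "eval_word G c w = foldr (\<lambda>l x. (if snd l then c (fst l) else inv\<^bsub>G\<^esub> (c (fst l))) \<otimes>\<^bsub>G\<^esub> x) w \<one>\<^bsub>G\<^esub>"

text \<open>G with generators c is (isomorphic to) the surface group
  Gamma_g = < a_1,b_1,...,a_g,b_g | [a_1,b_1]...[a_g,b_g] >.\<close>
definition surface_group :: "('g, 'm) monoid_scheme \<Rightarrow> nat \<Rightarrow> (nat \<Rightarrow> 'g) \<Rightarrow> bool" where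
  "surface_group G g c \<longleftrightarrow> group G \<and> (\<forall>j<2*g. c j \<in> carrier G) \<and>
     carrier G = {eval_word G c w | w. word_in g w} \<and>
     (\<forall>w. word_in g w \<longrightarrow> (eval_word G c w = \<one>\<^bsub>G\<^esub> \<longleftrightarrow> surf_equiv g w []))"

section \<open>Hyperbolizations: PSL(2,R) = PSU(1,1) acting on the closed unit disk\<close>

definition mob :: "complex \<Rightarrow> complex \<Rightarrow> complex \<Rightarrow> complex" where
  "mob \<alpha> \<beta> z = (\<alpha> * z + \<beta>) / (cnj \<beta> * z + cnj \<alpha>)"

definition is_mob :: "complex \<Rightarrow> complex \<Rightarrow> (complex \<Rightarrow> complex) \<Rightarrow> bool" where
  "is_mob \<alpha> \<beta> f \<longleftrightarrow> (cmod \<alpha>)\<^sup>2 - (cmod \<beta>)\<^sup>2 = 1 \<and> (\<forall>z\<in>cball 0 1. f z = mob \<alpha> \<beta> z)"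

text \<open>h : G -> PSL(2,R), each element recorded by its action on the closed disk.\<close>
definition hyperbolization :: "('g, 'm) monoid_scheme \<Rightarrow> ('g \<Rightarrow> complex \<Rightarrow> complex) \<Rightarrow> bool" where
  "hyperbolization G h \<longleftrightarrow>
     (\<forall>x\<in>carrier G. \<exists>\<alpha> \<beta>. is_mob \<alpha> \<beta> (h x)) \<and>
     (\<forall>x\<in>carrier G. \<forall>y\<in>carrier G. \<forall>z\<in>cball 0 1. h (x \<otimes>\<^bsub>G\<^esub> y) z = h x (h y z)) \<and>
     \<comment> \<open>faithful\<close>
     (\<forall>x\<in>carrier G. (\<forall>z\<in>cball 0 1. h x z = z) \<longrightarrow> x = \<one>\<^bsub>G\<^esub>) \<and>
     \<comment> \<open>discrete image\<close>
     (\<exists>\<epsilon>>0. \<forall>x\<in>carrier G. \<forall>\<alpha> \<beta>. is_mob \<alpha> \<beta> (h x) \<and> cmod (\<alpha> - 1) < \<epsilon> \<and> cmod \<beta> < \<epsilon>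
         \<longrightarrow> (\<forall>z\<in>cball 0 1. h x z = z)) \<and>
     \<comment> \<open>cocompact\<close>
     (\<exists>K. compact K \<and> K \<subseteq> ball 0 1 \<and> (\<forall>z\<in>ball 0 1. \<exists>x\<in>carrier G. \<exists>k\<in>K. z = h x k))"

definition attracting_fp :: "(complex \<Rightarrow> complex) \<Rightarrow> complex \<Rightarrow> bool" where
  "attracting_fp f p \<longleftrightarrow> p \<in> sphere 0 1 \<and> f p = p \<and>
     (\<forall>z\<in>ball 0 1. (\<lambda>k. (f ^^ k) z) \<longlonglongrightarrow> p)"

definition symplectic_form :: "('v::euclidean_space \<Rightarrow> 'v \<Rightarrow> real) \<Rightarrow> bool" where
  "symplectic_form \<omega> \<longleftrightarrow> bilinear \<omega> \<and> (\<forall>u v. \<omega> u v = - \<omega> v u) \<and>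
     (\<forall>u. (\<forall>v. \<omega> u v = 0) \<longrightarrow> u = 0)"

definition Sp :: "('v::euclidean_space \<Rightarrow> 'v \<Rightarrow> real) \<Rightarrow> ('v \<Rightarrow> 'v) set" where
  "Sp \<omega> = {A. linear A \<and> (\<forall>u v. \<omega> (A u) (A v) = \<omega> u v)}"

definition lagrangian :: "('v::euclidean_space \<Rightarrow> 'v \<Rightarrow> real) \<Rightarrow> 'v set \<Rightarrow> bool" where
  "lagrangian \<omega> L \<longleftrightarrow> subspace L \<and> 2 * dim L = DIM('v) \<and> (\<forall>u\<in>L. \<forall>v\<in>L. \<omega> u v = 0)"

definition transverse :: "'v::euclidean_space set \<Rightarrow> 'v set \<Rightarrow> bool" where
  "transverse L L' \<longleftrightarrow> L \<inter> L' = {0}"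

definition XSp :: "('v::euclidean_space \<Rightarrow> 'v \<Rightarrow> real) \<Rightarrow> ('v \<Rightarrow> 'v) set" where
  "XSp \<omega> = {J. linear J \<and> (\<forall>v. J (J v) = - v) \<and> (\<forall>u v. \<omega> u (J v) = \<omega> v (J u)) \<and>
               (\<forall>v. v \<noteq> 0 \<longrightarrow> \<omega> v (J v) > 0)}"

definition Jnorm :: "('v::euclidean_space \<Rightarrow> 'v \<Rightarrow> real) \<Rightarrow> ('v \<Rightarrow> 'v) \<Rightarrow> 'v \<Rightarrow> real" where
  "Jnorm \<omega> J v = sqrt (\<omega> v (J v))"

definition id_opnorm :: "('v::euclidean_space \<Rightarrow> 'v \<Rightarrow> real) \<Rightarrow> ('v \<Rightarrow> 'v) \<Rightarrow> ('v \<Rightarrow> 'v) \<Rightarrow> real" where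
  "id_opnorm \<omega> J1 J2 = (SUP v\<in>-{0}. Jnorm \<omega> J2 v / Jnorm \<omega> J1 v)"

definition dSp :: "('v::euclidean_space \<Rightarrow> 'v \<Rightarrow> real) \<Rightarrow> ('v \<Rightarrow> 'v) \<Rightarrow> ('v \<Rightarrow> 'v) \<Rightarrow> real" where
  "dSp \<omega> J1 J2 = \<bar>ln (id_opnorm \<omega> J1 J2)\<bar> + \<bar>ln (id_opnorm \<omega> J2 J1)\<bar>"

definition sp_act :: "('v \<Rightarrow> 'v) \<Rightarrow> ('v \<Rightarrow> 'v) \<Rightarrow> ('v \<Rightarrow> 'v)" where
  "sp_act A J = A \<circ> J \<circ> Hilbert_Choice.inv A"

definition translength :: "('v::euclidean_space \<Rightarrow> 'v \<Rightarrow> real) \<Rightarrow> ('v \<Rightarrow> 'v) \<Rightarrow> real" where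
  "translength \<omega> A = (INF J\<in>XSp \<omega>. dSp \<omega> J (sp_act A J))"

definition YSp :: "('v::euclidean_space \<Rightarrow> 'v \<Rightarrow> real) \<Rightarrow> 'v set \<Rightarrow> 'v set \<Rightarrow> ('v \<Rightarrow> 'v) set" where
  "YSp \<omega> Lm Lp = {J \<in> XSp \<omega>. J ` Lp = Lm \<and> J ` Lm = Lp}"

definition sp_rep :: "('g, 'm) monoid_scheme \<Rightarrow> ('v::euclidean_space \<Rightarrow> 'v \<Rightarrow> real) \<Rightarrow> ('g \<Rightarrow> 'v \<Rightarrow> 'v) \<Rightarrow> bool" where
  "sp_rep G \<omega> \<rho> \<longleftrightarrow> (\<forall>x\<in>carrier G. \<rho> x \<in> Sp \<omega>) \<and>
     (\<forall>x\<in>carrier G. \<forall>y\<in>carrier G. \<rho> (x \<otimes>\<^bsub>G\<^esub> y) = \<rho> x \<circ> \<rho> y)"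

definition pos_index :: "('a::euclidean_space \<Rightarrow> real) \<Rightarrow> 'a set \<Rightarrow> nat" where
  "pos_index Q S = Sup {dim W | W. subspace W \<and> W \<subseteq> S \<and> (\<forall>x\<in>W. x \<noteq> 0 \<longrightarrow> Q x > 0)}"

definition maslov :: "('v::euclidean_space \<Rightarrow> 'v \<Rightarrow> real) \<Rightarrow> 'v set \<Rightarrow> 'v set \<Rightarrow> 'v set \<Rightarrow> int" where
  "maslov \<omega> L1 L2 L3 =
    (let Q = (\<lambda>(x1, x2, x3). \<omega> x1 x2 + \<omega> x2 x3 + \<omega> x3 x1);
         S = L1 \<times> L2 \<times> L3
     in int (pos_index Q S) - int (pos_index (\<lambda>x. - Q x) S))"

text \<open>Toledo invariant = evaluation of the Maslov (Kahler) cocycle on the fundamental cycle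
  sum_k [p_(k-1) | l_k] of the presentation (p_k = prefixes of the relator),
  normalized so that the Milnor-Wood inequality reads |T| <= n(g-1).\<close>
definition toledo :: "('g, 'm) monoid_scheme \<Rightarrow> nat \<Rightarrow> (nat \<Rightarrow> 'g) \<Rightarrow>
    ('v::euclidean_space \<Rightarrow> 'v \<Rightarrow> real) \<Rightarrow> ('g \<Rightarrow> 'v \<Rightarrow> 'v) \<Rightarrow> real" where
  "toledo G g c \<omega> \<rho> =
    (let L0 = (SOME L. lagrangian \<omega> L);
         p = (\<lambda>k. eval_word G c (take k (surf_relator g)))
     in - (1/4) * (\<Sum>k=1..4*g. real_of_int (maslov \<omega> L0 (\<rho> (p (k-1)) ` L0) (\<rho> (p k) ` L0))))"

definition maximal_rep :: "('g, 'm) monoid_scheme \<Rightarrow> nat \<Rightarrow> (nat \<Rightarrow> 'g) \<Rightarrow>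
    ('v::euclidean_space \<Rightarrow> 'v \<Rightarrow> real) \<Rightarrow> nat \<Rightarrow> ('g \<Rightarrow> 'v \<Rightarrow> 'v) \<Rightarrow> bool" where
  "maximal_rep G g c \<omega> n \<rho> \<longleftrightarrow> sp_rep G \<omega> \<rho> \<and> toledo G g c \<omega> \<rho> = real n * (real g - 1)"

definition oproj :: "'v::euclidean_space set \<Rightarrow> 'v \<Rightarrow> 'v" where
  "oproj L v = (THE w. w \<in> L \<and> (\<forall>u\<in>L. inner (v - w) u = 0))"

text \<open>Gap metric on subspaces (induces the standard topology on the Grassmannian).\<close>
definition gap :: "'v::euclidean_space set \<Rightarrow> 'v set \<Rightarrow> real" where
  "gap L L' = (SUP v\<in>cball 0 1. norm (oproj L v - oproj L' v))"

definition boundary_map :: "('g, 'm) monoid_scheme \<Rightarrow> ('g \<Rightarrow> complex \<Rightarrow> complex) \<Rightarrow>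
    ('v::euclidean_space \<Rightarrow> 'v \<Rightarrow> real) \<Rightarrow> ('g \<Rightarrow> 'v \<Rightarrow> 'v) \<Rightarrow> (complex \<Rightarrow> 'v set) \<Rightarrow> bool" where
  "boundary_map G h \<omega> \<rho> \<phi> \<longleftrightarrow>
     (\<forall>p\<in>sphere 0 1. lagrangian \<omega> (\<phi> p)) \<and>
     (\<forall>x\<in>carrier G. \<forall>p\<in>sphere 0 1. \<phi> (h x p) = \<rho> x ` \<phi> p) \<and>
     (\<forall>p\<in>sphere 0 1. \<forall>\<epsilon>>0. \<exists>\<delta>>0. \<forall>q\<in>sphere 0 1. dist q p < \<delta> \<longrightarrow> gap (\<phi> q) (\<phi> p) < \<epsilon>) \<and>
     (\<forall>p\<in>sphere 0 1. \<forall>q\<in>sphere 0 1. p \<noteq> q \<longrightarrow> transverse (\<phi> p) (\<phi> q))"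

end

theory Submission
  imports Defs
begin

locale symp =
  fixes \<omega> :: "'v::euclidean_space \<Rightarrow> 'v \<Rightarrow> real"
  assumes sf: "symplectic_form \<omega>"
begin

lemma bil: "bilinear \<omega>" using sf unfolding symplectic_form_def by (elim conjE)
lemma anti: "\<omega> u v = - \<omega> v u" using sf unfolding symplectic_form_def by (elim conjE allE)
lemma nondeg: "(\<And>v. \<omega> u v = 0) \<Longrightarrow> u = 0" using sf unfolding symplectic_form_def by (elim conjE) blast
lemma self0[simp]: "\<omega> u u = 0" using anti[of u u] by simp

lemma ladd[simp]: "\<omega> (x + y) z = \<omega> x z + \<omega> y z" by (rule bilinear_ladd[OF bil])
lemma radd[simp]: "\<omega> x (y + z) = \<omega> x y + \<omega> x z" by (rule bilinear_radd[OF bil])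
lemma lmul[simp]: "\<omega> (c *\<^sub>R x) y = c * \<omega> x y" using bilinear_lmul[OF bil] by simp
lemma rmul[simp]: "\<omega> x (c *\<^sub>R y) = c * \<omega> x y" using bilinear_rmul[OF bil] by simp
lemma lneg[simp]: "\<omega> (- x) y = - \<omega> x y" by (rule bilinear_lneg[OF bil])
lemma rneg[simp]: "\<omega> x (- y) = - \<omega> x y" by (rule bilinear_rneg[OF bil])
lemma lsub[simp]: "\<omega> (x - y) z = \<omega> x z - \<omega> y z" by (rule bilinear_lsub[OF bil])
lemma rsub[simp]: "\<omega> z (x - y) = \<omega> z x - \<omega> z y" by (rule bilinear_rsub[OF bil])
lemma lzero[simp]: "\<omega> 0 y = 0" by (rule bilinear_lzero[OF bil])
lemma rzero[simp]: "\<omega> x 0 = 0" by (rule bilinear_rzero[OF bil])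

lemma XSpD:
  assumes "J \<in> XSp \<omega>"
  shows "linear J" "\<And>v. J (J v) = - v" "\<And>u v. \<omega> u (J v) = \<omega> v (J u)"
    "\<And>v. v \<noteq> 0 \<Longrightarrow> \<omega> v (J v) > 0"
  using assms unfolding XSp_def by auto

lemma X_nonneg: assumes "J \<in> XSp \<omega>" shows "\<omega> v (J v) \<ge> 0"
proof (cases "v = 0")
  case True then show ?thesis using XSpD(1)[OF assms] by (simp add: linear_0)
next
  case False show ?thesis using XSpD(4)[OF assms False] by simp
qed

lemma X_sympl: assumes "J \<in> XSp \<omega>" shows "\<omega> (J a) (J b) = \<omega> a b"
proof -
  have "\<omega> (J a) (J b) = \<omega> b (J (J a))" by (rule XSpD(3)[OF assms])
  also have "\<dots> = \<omega> a b" using XSpD(2)[OF assms] anti[of b a] by simp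
  finally show ?thesis .
qed

lemma X_norm_J: assumes "J \<in> XSp \<omega>" shows "\<omega> (J v) (J (J v)) = \<omega> v (J v)"
  by (rule X_sympl[OF assms])

lemma Jnorm_J: assumes "J \<in> XSp \<omega>" shows "Jnorm \<omega> J (J v) = Jnorm \<omega> J v"
  unfolding Jnorm_def using X_norm_J[OF assms] by simp

lemma Jnorm_sq: assumes "J \<in> XSp \<omega>" shows "(Jnorm \<omega> J v)\<^sup>2 = \<omega> v (J v)"
  unfolding Jnorm_def using X_nonneg[OF assms] by simp

lemma Jnorm_nonneg: assumes "J \<in> XSp \<omega>" shows "Jnorm \<omega> J v \<ge> 0" unfolding Jnorm_def using X_nonneg[OF assms] by simp

lemma Jnorm_pos: assumes "J \<in> XSp \<omega>" "v \<noteq> 0" shows "Jnorm \<omega> J v > 0"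
  unfolding Jnorm_def using XSpD(4)[OF assms] by simp

lemma Jnorm_neg: assumes "J \<in> XSp \<omega>" shows "Jnorm \<omega> J (- v) = Jnorm \<omega> J v"
  unfolding Jnorm_def using linear_neg[OF XSpD(1)[OF assms]] by simp

lemma CS_aux:
  assumes J: "J \<in> XSp \<omega>"
  shows "\<omega> a (J b) \<le> Jnorm \<omega> J a * Jnorm \<omega> J b"
proof (cases "a = 0")
  case True then show ?thesis using XSpD(1)[OF J] by (simp add: Jnorm_def)
next
  case False
  note lin = XSpD(1)[OF J]
  define Na where "Na = Jnorm \<omega> J a"
  define Nb where "Nb = Jnorm \<omega> J b"
  have Na: "Na > 0" using Jnorm_pos[OF J False] Na_def by simp
  have Nb: "Nb \<ge> 0" using Nb_def Jnorm_nonneg[OF J] by simp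
  define l where "l = Nb / Na"
  have "0 \<le> \<omega> (l *\<^sub>R a - b) (J (l *\<^sub>R a - b))" by (rule X_nonneg[OF J])
  also have "\<dots> = l^2 * \<omega> a (J a) - 2 * l * \<omega> a (J b) + \<omega> b (J b)"
  proof -
    have e: "J (l *\<^sub>R a - b) = l *\<^sub>R J a - J b" by (simp add: linear_diff[OF lin] linear_scale[OF lin])
    have "\<omega> (l *\<^sub>R a - b) (J (l *\<^sub>R a - b)) = l * (l * \<omega> a (J a)) - l * \<omega> a (J b) - (l * \<omega> b (J a) - \<omega> b (J b))"
      unfolding e by (simp add: algebra_simps)
    then show ?thesis using XSpD(3)[OF J, of b a] by (simp add: power2_eq_square)
  qed
  finally have 1: "2 * l * \<omega> a (J b) \<le> l^2 * Na^2 + Nb^2"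
    using Jnorm_sq[OF J, of a] Jnorm_sq[OF J, of b] Na_def Nb_def by simp
  have "l^2 * Na^2 = Nb^2" using Na unfolding l_def by (simp add: field_simps)
  with 1 have 2: "l * \<omega> a (J b) \<le> Nb^2" by simp
  show ?thesis
  proof (cases "Nb = 0")
    case True
    then have "\<omega> b (J b) = 0" using Jnorm_sq[OF J, of b] Nb_def by simp
    then have "b = 0" using XSpD(4)[OF J, of b] by (metis less_irrefl)
    then show ?thesis using lin by (simp add: linear_0 Jnorm_def)
  next
    case False
    then have "l > 0" using Na Nb l_def by simp
    then have "\<omega> a (J b) \<le> Nb^2 / l" using 2 by (simp add: field_simps)
    also have "Nb^2 / l = Na * Nb" using Na False unfolding l_def by (simp add: field_simps power2_eq_square)
    finally show ?thesis using Na_def Nb_def by simp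
  qed
qed

lemma CS:
  assumes J: "J \<in> XSp \<omega>"
  shows "\<bar>\<omega> a (J b)\<bar> \<le> Jnorm \<omega> J a * Jnorm \<omega> J b"
proof -
  have "\<omega> a (J (- b)) \<le> Jnorm \<omega> J a * Jnorm \<omega> J (- b)" by (rule CS_aux[OF J])
  then have "- \<omega> a (J b) \<le> Jnorm \<omega> J a * Jnorm \<omega> J b"
    using Jnorm_neg[OF J] linear_neg[OF XSpD(1)[OF J]] by simp
  then show ?thesis using CS_aux[OF J, of a b] by linarith
qed

end

context symp begin

lemma X_lower:
  assumes J: "J \<in> XSp \<omega>"
  shows "\<exists>c>0. \<forall>v. c * (norm v)\<^sup>2 \<le> \<omega> v (J v)"
proof -
  have lin: "linear J" using XSpD(1)[OF J] .
  have cont: "continuous_on (sphere (0::'v) 1) (\<lambda>v. \<omega> v (J v))"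
    by (rule bilinear_continuous_on_compose[OF continuous_on_id linear_continuous_on bil])
       (use lin linear_conv_bounded_linear in auto)
  have ne: "sphere (0::'v) 1 \<noteq> {}" by simp
  obtain x where x: "x \<in> sphere 0 1" "\<forall>y\<in>sphere 0 1. \<omega> x (J x) \<le> \<omega> y (J y)"
    using continuous_attains_inf[OF compact_sphere ne cont] by blast
  have x0: "x \<noteq> 0" using x(1) by auto
  define c where "c = \<omega> x (J x)"
  have cpos: "c > 0" using XSpD(4)[OF J x0] c_def by simp
  have "c * (norm v)\<^sup>2 \<le> \<omega> v (J v)" for v
  proof (cases "v = 0")
    case True then show ?thesis using X_nonneg[OF J, of v] by simp
  next
    case False
    define u where "u = (1 / norm v) *\<^sub>R v"
    have u: "u \<in> sphere 0 1" using False unfolding u_def by simp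
    have "v = norm v *\<^sub>R u" using False unfolding u_def by simp
    then have "\<omega> v (J v) = (norm v)\<^sup>2 * \<omega> u (J u)"
      by (metis lmul rmul linear_scale[OF lin] power2_eq_square mult.assoc mult.left_commute)
    moreover have "c \<le> \<omega> u (J u)" using x(2) u c_def by blast
    ultimately show ?thesis by (metis mult.commute mult_right_mono zero_le_power2)
  qed
  then show ?thesis using cpos by blast
qed

lemma X_upper:
  assumes J: "J \<in> XSp \<omega>"
  shows "\<exists>C>0. \<forall>v. \<omega> v (J v) \<le> C * (norm v)\<^sup>2"
proof -
  obtain B where B: "B > 0" "\<forall>x y. norm (\<omega> x y) \<le> B * norm x * norm y"
    using bilinear_bounded_pos[OF bil] by blast
  have "bounded_linear J" using XSpD(1)[OF J] linear_conv_bounded_linear by blast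
  then obtain K where K: "K > 0" "\<forall>x. norm (J x) \<le> norm x * K"
    using bounded_linear.pos_bounded by blast
  have "\<omega> v (J v) \<le> (B * K) * (norm v)\<^sup>2" for v
  proof -
    have "\<omega> v (J v) \<le> B * norm v * norm (J v)" using B(2)[rule_format, of v "J v"] by simp
    also have "\<dots> \<le> B * norm v * (norm v * K)"
      using K(2)[rule_format, of v] B(1) by (simp add: mult_left_mono)
    finally show ?thesis by (simp add: power2_eq_square algebra_simps)
  qed
  then show ?thesis using B K by (metis mult_pos_pos)
qed

lemma Jnorm_bound:
  assumes J1: "J1 \<in> XSp \<omega>" and J2: "J2 \<in> XSp \<omega>"
  shows "\<exists>C. \<forall>v. Jnorm \<omega> J2 v \<le> C * Jnorm \<omega> J1 v"
proof -
  obtain c where c: "c > 0" "\<forall>v. c * (norm v)\<^sup>2 \<le> \<omega> v (J1 v)" using X_lower[OF J1] by blast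
  obtain C where C: "C > 0" "\<forall>v. \<omega> v (J2 v) \<le> C * (norm v)\<^sup>2" using X_upper[OF J2] by blast
  have "Jnorm \<omega> J2 v \<le> sqrt (C / c) * Jnorm \<omega> J1 v" for v
  proof -
    have "\<omega> v (J2 v) \<le> C * (norm v)\<^sup>2" using C by blast
    also have "\<dots> \<le> (C / c) * \<omega> v (J1 v)"
    proof -
      have "C * (norm v)\<^sup>2 = (C / c) * (c * (norm v)\<^sup>2)" using c by simp
      also have "\<dots> \<le> (C / c) * \<omega> v (J1 v)" using c C by (intro mult_left_mono) auto
      finally show ?thesis .
    qed
    finally have "\<omega> v (J2 v) \<le> (C / c) * \<omega> v (J1 v)" .
    then have "sqrt (\<omega> v (J2 v)) \<le> sqrt ((C / c) * \<omega> v (J1 v))" by (rule real_sqrt_le_mono)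
    then show ?thesis unfolding Jnorm_def by (simp only: real_sqrt_mult)
  qed
  then show ?thesis by blast
qed

lemma nonzero_exists: "\<exists>v::'v. v \<noteq> 0"
proof -
  obtain b :: 'v where "b \<in> Basis" using nonempty_Basis by blast
  then show ?thesis using nonzero_Basis by blast
qed

lemma opnorm_upper:
  assumes J1: "J1 \<in> XSp \<omega>" and J2: "J2 \<in> XSp \<omega>"
  shows "Jnorm \<omega> J2 v \<le> id_opnorm \<omega> J1 J2 * Jnorm \<omega> J1 v"
proof (cases "v = 0")
  case True
  then show ?thesis using XSpD(1)[OF J2] XSpD(1)[OF J1] by (simp add: Jnorm_def linear_0)
next
  case False
  obtain C where C: "\<forall>v. Jnorm \<omega> J2 v \<le> C * Jnorm \<omega> J1 v" using Jnorm_bound[OF J1 J2] by blast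
  have bdd: "bdd_above ((\<lambda>v. Jnorm \<omega> J2 v / Jnorm \<omega> J1 v) ` (- {0}))"
  proof (rule bdd_aboveI2)
    fix x :: 'v assume "x \<in> - {0}"
    then have "Jnorm \<omega> J1 x > 0" using Jnorm_pos[OF J1] by auto
    then show "Jnorm \<omega> J2 x / Jnorm \<omega> J1 x \<le> C" using C by (simp add: divide_le_eq)
  qed
  have "Jnorm \<omega> J2 v / Jnorm \<omega> J1 v \<le> id_opnorm \<omega> J1 J2"
    unfolding id_opnorm_def using False by (intro cSUP_upper[OF _ bdd]) auto
  moreover have "Jnorm \<omega> J1 v > 0" using Jnorm_pos[OF J1 False] .
  ultimately show ?thesis by (simp add: divide_le_eq)
qed

lemma opnorm_least:
  assumes J1: "J1 \<in> XSp \<omega>" and J2: "J2 \<in> XSp \<omega>"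
    and M: "\<And>v. Jnorm \<omega> J2 v \<le> M * Jnorm \<omega> J1 v"
  shows "id_opnorm \<omega> J1 J2 \<le> M"
  unfolding id_opnorm_def
proof (rule cSUP_least)
  show "- {0::'v} \<noteq> {}" using nonzero_exists by auto
  fix x :: 'v assume "x \<in> - {0}"
  then have "Jnorm \<omega> J1 x > 0" using Jnorm_pos[OF J1] by auto
  then show "Jnorm \<omega> J2 x / Jnorm \<omega> J1 x \<le> M" using M[of x] by (simp add: divide_le_eq)
qed

lemma swap_bound:
  assumes J1: "J1 \<in> XSp \<omega>" and J2: "J2 \<in> XSp \<omega>"
    and M: "\<And>v. Jnorm \<omega> J2 v \<le> M * Jnorm \<omega> J1 v"
  shows "Jnorm \<omega> J1 v \<le> M * Jnorm \<omega> J2 v"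
proof -
  have e: "J2 (- J2 (J1 v)) = J1 v" using XSpD(2)[OF J2] linear_neg[OF XSpD(1)[OF J2]] by simp
  have "(Jnorm \<omega> J1 v)\<^sup>2 = \<omega> v (J1 v)" by (rule Jnorm_sq[OF J1])
  also have "\<dots> = \<omega> v (J2 (- J2 (J1 v)))" using e by simp
  also have "\<dots> \<le> Jnorm \<omega> J2 v * Jnorm \<omega> J2 (- J2 (J1 v))" using CS[OF J2, of v "- J2 (J1 v)"] by simp
  also have "Jnorm \<omega> J2 (- J2 (J1 v)) = Jnorm \<omega> J2 (J1 v)" using Jnorm_neg[OF J2] Jnorm_J[OF J2] by simp
  finally have 1: "(Jnorm \<omega> J1 v)\<^sup>2 \<le> Jnorm \<omega> J2 v * Jnorm \<omega> J2 (J1 v)" .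
  have "Jnorm \<omega> J2 (J1 v) \<le> M * Jnorm \<omega> J1 (J1 v)" by (rule M)
  also have "\<dots> = M * Jnorm \<omega> J1 v" using Jnorm_J[OF J1] by simp
  finally have 2: "Jnorm \<omega> J2 (J1 v) \<le> M * Jnorm \<omega> J1 v" .
  have "(Jnorm \<omega> J1 v)\<^sup>2 \<le> Jnorm \<omega> J2 v * (M * Jnorm \<omega> J1 v)"
    using 1 2 Jnorm_nonneg[OF J2, of v] by (meson mult_left_mono order_trans)
  then have "Jnorm \<omega> J1 v * Jnorm \<omega> J1 v \<le> (M * Jnorm \<omega> J2 v) * Jnorm \<omega> J1 v"
    by (simp add: power2_eq_square algebra_simps)
  moreover have Mpos: "M \<ge> 0"
  proof -
    obtain w :: 'v where w: "w \<noteq> 0" using nonzero_exists by blast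
    have "0 < Jnorm \<omega> J2 w" using Jnorm_pos[OF J2 w] .
    also have "\<dots> \<le> M * Jnorm \<omega> J1 w" by (rule M)
    finally show ?thesis using Jnorm_nonneg[OF J1, of w] by (simp add: zero_less_mult_iff)
  qed
  ultimately show ?thesis
  proof (cases "Jnorm \<omega> J1 v = 0")
    case True then show ?thesis using Mpos Jnorm_nonneg[OF J2, of v] by simp
  next
    case False
    then have "Jnorm \<omega> J1 v > 0" using Jnorm_nonneg[OF J1, of v] by simp
    then show ?thesis using \<open>Jnorm \<omega> J1 v * Jnorm \<omega> J1 v \<le> (M * Jnorm \<omega> J2 v) * Jnorm \<omega> J1 v\<close>
      by (simp add: mult_le_cancel_right)
  qed
qed

end

context symp begin
lemma opnorm_sym:
  assumes J1: "J1 \<in> XSp \<omega>" and J2: "J2 \<in> XSp \<omega>"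
  shows "id_opnorm \<omega> J1 J2 = id_opnorm \<omega> J2 J1"
proof (rule antisym)
  show "id_opnorm \<omega> J2 J1 \<le> id_opnorm \<omega> J1 J2"
    by (rule opnorm_least[OF J2 J1 swap_bound[OF J1 J2 opnorm_upper[OF J1 J2]]])
  show "id_opnorm \<omega> J1 J2 \<le> id_opnorm \<omega> J2 J1"
    by (rule opnorm_least[OF J1 J2 swap_bound[OF J2 J1 opnorm_upper[OF J2 J1]]])
qed

lemma opnorm_ge1:
  assumes J1: "J1 \<in> XSp \<omega>" and J2: "J2 \<in> XSp \<omega>"
  shows "1 \<le> id_opnorm \<omega> J1 J2"
proof -
  define M where "M = id_opnorm \<omega> J1 J2"
  obtain v :: 'v where v: "v \<noteq> 0" using nonzero_exists by blast
  have p1: "Jnorm \<omega> J1 v > 0" using Jnorm_pos[OF J1 v] .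
  have p2: "Jnorm \<omega> J2 v > 0" using Jnorm_pos[OF J2 v] .
  have a: "Jnorm \<omega> J2 v \<le> M * Jnorm \<omega> J1 v" using opnorm_upper[OF J1 J2] M_def by simp
  have b: "Jnorm \<omega> J1 v \<le> M * Jnorm \<omega> J2 v"
    using opnorm_upper[OF J2 J1] opnorm_sym[OF J1 J2] M_def by simp
  have Mpos: "M > 0"
  proof (rule ccontr)
    assume "\<not> M > 0"
    then have "M * Jnorm \<omega> J1 v \<le> 0" using p1 by (simp add: mult_nonpos_nonneg)
    then show False using a p2 by linarith
  qed
  have "Jnorm \<omega> J2 v \<le> M * (M * Jnorm \<omega> J2 v)"
    using a b Mpos by (meson mult_left_mono order_trans less_imp_le)
  then have "1 * Jnorm \<omega> J2 v \<le> (M * M) * Jnorm \<omega> J2 v" by (simp add: mult.assoc)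
  then have "1 \<le> M * M" using p2 by (simp only: mult_le_cancel_right)
  show ?thesis unfolding M_def[symmetric]
  proof (rule ccontr)
    assume "\<not> 1 \<le> M"
    then have "M * M < 1 * 1" using Mpos by (intro mult_strict_mono) auto
    then show False using \<open>1 \<le> M * M\<close> by simp
  qed
qed

lemma dSp_eq:
  assumes J1: "J1 \<in> XSp \<omega>" and J2: "J2 \<in> XSp \<omega>"
  shows "dSp \<omega> J1 J2 = 2 * ln (id_opnorm \<omega> J1 J2)"
  using opnorm_sym[OF J1 J2] opnorm_ge1[OF J1 J2] unfolding dSp_def by simp

lemma dSp_nonneg:
  assumes J1: "J1 \<in> XSp \<omega>" and J2: "J2 \<in> XSp \<omega>"
  shows "0 \<le> dSp \<omega> J1 J2"
  unfolding dSp_def by simp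

lemma dSp_le:
  assumes J1: "J1 \<in> XSp \<omega>" and J2: "J2 \<in> XSp \<omega>"
    and M: "\<And>v. Jnorm \<omega> J2 v \<le> M * Jnorm \<omega> J1 v"
  shows "dSp \<omega> J1 J2 \<le> 2 * ln M"
proof -
  have le: "id_opnorm \<omega> J1 J2 \<le> M" by (rule opnorm_least[OF J1 J2 M])
  have "1 \<le> id_opnorm \<omega> J1 J2" by (rule opnorm_ge1[OF J1 J2])
  then show ?thesis using le unfolding dSp_eq[OF J1 J2] by simp
qed
end

locale pairL = symp \<omega> for \<omega> :: "'v::euclidean_space \<Rightarrow> 'v \<Rightarrow> real" +
  fixes Lp Lm :: "'v set"
  assumes lagp: "lagrangian \<omega> Lp" and lagm: "lagrangian \<omega> Lm" and tr: "transverse Lp Lm"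
begin

lemma subp: "subspace Lp" using lagp unfolding lagrangian_def by blast
lemma subm: "subspace Lm" using lagm unfolding lagrangian_def by blast
lemma isop: "u \<in> Lp \<Longrightarrow> u' \<in> Lp \<Longrightarrow> \<omega> u u' = 0" using lagp unfolding lagrangian_def by blast
lemma isom: "u \<in> Lm \<Longrightarrow> u' \<in> Lm \<Longrightarrow> \<omega> u u' = 0" using lagm unfolding lagrangian_def by blast
lemma dimp: "2 * dim Lp = DIM('v)" using lagp unfolding lagrangian_def by blast
lemma dimm: "2 * dim Lm = DIM('v)" using lagm unfolding lagrangian_def by blast
lemma int0: "Lp \<inter> Lm = {0}" using tr unfolding transverse_def by blast

lemma zp[simp]: "0 \<in> Lp" using subp subspace_0 by blast
lemma zm[simp]: "0 \<in> Lm" using subm subspace_0 by blast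

lemma sum_univ: "{x + y |x y. x \<in> Lp \<and> y \<in> Lm} = UNIV"
proof -
  let ?S = "{x + y |x y. x \<in> Lp \<and> y \<in> Lm}"
  have s: "subspace ?S" by (rule subspace_sums[OF subp subm])
  have d0: "dim (Lp \<inter> Lm) = 0" using int0 by simp
  have "dim ?S = DIM('v)" using dim_sums_Int[OF subp subm] dimp dimm d0 by linarith
  then have "span ?S = UNIV" using dim_eq_full by blast
  then show ?thesis using span_eq_iff[THEN iffD2, OF s] by simp
qed

lemma decomp: "\<exists>u w. u \<in> Lp \<and> w \<in> Lm \<and> v = u + w"
proof -
  have "v \<in> {x + y |x y. x \<in> Lp \<and> y \<in> Lm}" unfolding sum_univ by (rule UNIV_I)
  then show ?thesis by blast
qed

lemma decomp_unique:
  assumes "u \<in> Lp" "w \<in> Lm" "u' \<in> Lp" "w' \<in> Lm" "u + w = u' + w'"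
  shows "u = u'" "w = w'"
proof -
  have "u - u' = w' - w" using assms(5) by (simp add: algebra_simps)
  moreover have "u - u' \<in> Lp" using subspace_diff[OF subp assms(1,3)] .
  moreover have "w' - w \<in> Lm" using subspace_diff[OF subm assms(4,2)] .
  ultimately have "u - u' \<in> Lp \<inter> Lm" by simp
  then have "u - u' = 0" unfolding int0 by simp
  then show "u = u'" by simp
  then show "w = w'" using assms(5) by simp
qed

definition pp :: "'v \<Rightarrow> 'v" where "pp v = (THE u. u \<in> Lp \<and> v - u \<in> Lm)"
definition pm :: "'v \<Rightarrow> 'v" where "pm v = v - pp v"

lemma pp_prop: "pp v \<in> Lp \<and> v - pp v \<in> Lm"
proof -
  obtain u w where uw: "u \<in> Lp" "w \<in> Lm" "v = u + w" using decomp by blast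
  have ex: "u \<in> Lp \<and> v - u \<in> Lm" using uw by simp
  have un: "x = u" if "x \<in> Lp \<and> v - x \<in> Lm" for x
  proof -
    have "x + (v - x) = u + w" using uw(3) by simp
    then show ?thesis using decomp_unique(1)[of x "v - x" u w] that uw(1,2) by blast
  qed
  have "\<exists>!x. x \<in> Lp \<and> v - x \<in> Lm" using ex un by blast
  then show ?thesis unfolding pp_def by (rule theI')
qed

lemma pp_in[simp]: "pp v \<in> Lp" using pp_prop by blast
lemma pm_in[simp]: "pm v \<in> Lm" using pp_prop unfolding pm_def by blast
lemma pp_pm: "pp v + pm v = v" unfolding pm_def by simp

lemma pp_eq: assumes "u \<in> Lp" "w \<in> Lm" shows "pp (u + w) = u" "pm (u + w) = w"
proof -
  show 1: "pp (u + w) = u"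
    using decomp_unique(1)[OF pp_in pm_in assms(1,2)] pp_pm[of "u + w"] by simp
  show "pm (u + w) = w" unfolding pm_def 1 by simp
qed

lemma pp_Lp: "u \<in> Lp \<Longrightarrow> pp u = u" using pp_eq(1)[of u 0] by simp
lemma pm_Lp: "u \<in> Lp \<Longrightarrow> pm u = 0" using pp_eq(2)[of u 0] by simp
lemma pp_Lm: "w \<in> Lm \<Longrightarrow> pp w = 0" using pp_eq(1)[of 0 w] by simp
lemma pm_Lm: "w \<in> Lm \<Longrightarrow> pm w = w" using pp_eq(2)[of 0 w] by simp

lemma pp_add: "pp (a + b) = pp a + pp b"
proof -
  have "a + b = (pp a + pp b) + (pm a + pm b)" using pp_pm[of a] pp_pm[of b] by (simp add: algebra_simps)
  then show ?thesis using pp_eq(1)[of "pp a + pp b" "pm a + pm b"]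
    subspace_add[OF subp pp_in pp_in] subspace_add[OF subm pm_in pm_in] by simp
qed

lemma pp_scale: "pp (c *\<^sub>R a) = c *\<^sub>R pp a"
proof -
  have "c *\<^sub>R a = c *\<^sub>R pp a + c *\<^sub>R pm a" using pp_pm[of a] by (metis scaleR_add_right)
  then show ?thesis using pp_eq(1)[of "c *\<^sub>R pp a" "c *\<^sub>R pm a"]
    subspace_scale[OF subp pp_in] subspace_scale[OF subm pm_in] by simp
qed

lemma lin_pp: "linear pp" by (rule linearI[OF pp_add pp_scale])
lemma lin_pm: "linear pm" unfolding pm_def by (rule linear_compose_sub[OF _ lin_pp]) (rule linearI; simp)

lemma pair_m: assumes "w \<in> Lm" "\<And>u. u \<in> Lp \<Longrightarrow> \<omega> u w = 0" shows "w = 0"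
proof -
  have "\<omega> w v = 0" for v
  proof -
    have "\<omega> v w = \<omega> (pp v) w + \<omega> (pm v) w" using pp_pm[of v] by (metis ladd)
    also have "\<dots> = 0" using assms isom[OF pm_in assms(1)] by simp
    finally show ?thesis using anti[of w v] by simp
  qed
  then show ?thesis using nondeg by blast
qed

lemma pair_p: assumes "u \<in> Lp" "\<And>w. w \<in> Lm \<Longrightarrow> \<omega> u w = 0" shows "u = 0"
proof -
  have "\<omega> u v = 0" for v
  proof -
    have "\<omega> u v = \<omega> u (pp v) + \<omega> u (pm v)" using pp_pm[of v] by (metis radd)
    also have "\<dots> = 0" using assms isop[OF assms(1) pp_in] by simp
    finally show ?thesis .
  qed
  then show ?thesis using nondeg by blast
qed

end

context pairL begin

lemma exists_Y:
  assumes linX: "linear X"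
    and symX: "\<And>u u'. u \<in> Lp \<Longrightarrow> u' \<in> Lp \<Longrightarrow> \<omega> u (X u') = \<omega> u' (X u)"
    and posX: "\<And>u. u \<in> Lp \<Longrightarrow> u \<noteq> 0 \<Longrightarrow> \<omega> u (X u) > 0"
  shows "\<exists>J\<in>YSp \<omega> Lm Lp. \<forall>u\<in>Lp. \<forall>u'\<in>Lp. \<omega> u (J u') = \<omega> u (X u')"
proof -
  define R where "R = (\<lambda>v. pm (X v))"
  have linR: "linear R" unfolding R_def using linear_compose[OF linX lin_pm] by (simp add: o_def)
  have Rm: "R u \<in> Lm" for u unfolding R_def by simp
  have omR: "\<omega> u (R u') = \<omega> u (X u')" if "u \<in> Lp" for u u'
  proof -
    have "\<omega> u (X u') = \<omega> u (pp (X u')) + \<omega> u (R u')" unfolding R_def using pp_pm[of "X u'"] by (metis radd)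
    then show ?thesis using isop[OF that pp_in] by simp
  qed
  have injR: "inj_on R Lp"
    unfolding linear_inj_on_iff_eq_0[OF linR subp]
  proof (intro ballI impI)
    fix u assume u: "u \<in> Lp" "R u = 0"
    then have "\<omega> u (X u) = 0" using omR[OF u(1), of u] by simp
    then show "u = 0" using posX[OF u(1)] by (metis less_irrefl)
  qed
  have imR: "R ` Lp = Lm"
  proof (rule subspace_dim_equal)
    show "subspace (R ` Lp)" by (rule linear_subspace_image[OF linR subp])
    show "subspace Lm" by (rule subm)
    show "R ` Lp \<subseteq> Lm" using Rm by blast
    have "dim (R ` Lp) = dim Lp" using dim_image_eq[OF linR, of Lp] injR span_eq_iff[THEN iffD2, OF subp] by simp
    then show "dim Lm \<le> dim (R ` Lp)" using dimp dimm by simp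
  qed
  define Ri where "Ri = inv_into Lp R"
  have Ri_in: "w \<in> Lm \<Longrightarrow> Ri w \<in> Lp" for w unfolding Ri_def using inv_into_into[of w R Lp] imR by simp
  have R_Ri: "w \<in> Lm \<Longrightarrow> R (Ri w) = w" for w unfolding Ri_def using f_inv_into_f[of w R Lp] imR by simp
  have Ri_R: "u \<in> Lp \<Longrightarrow> Ri (R u) = u" for u unfolding Ri_def using inv_into_f_f[OF injR] by simp
  have Ri_eq: "Ri w = u" if "w \<in> Lm" "u \<in> Lp" "R u = w" for w u
    using Ri_R[OF that(2)] that(3) by simp
  have Ri_add: "Ri (a + b) = Ri a + Ri b" if "a \<in> Lm" "b \<in> Lm" for a b
    by (rule Ri_eq) (use that subspace_add[OF subm] subspace_add[OF subp] Ri_in R_Ri linear_add[OF linR] in auto)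
  have Ri_scale: "Ri (c *\<^sub>R a) = c *\<^sub>R Ri a" if "a \<in> Lm" for a c
    by (rule Ri_eq) (use that subspace_scale[OF subm] subspace_scale[OF subp] Ri_in R_Ri linear_scale[OF linR] in auto)
  have Ri0: "Ri 0 = 0" using Ri_eq[of 0 0] linear_0[OF linR] by simp
  have linRim: "linear (\<lambda>v. Ri (pm v))"
  proof (rule linearI)
    fix a b show "Ri (pm (a + b)) = Ri (pm a) + Ri (pm b)"
      using Ri_add[OF pm_in pm_in] linear_add[OF lin_pm] by simp
  next
    fix c a show "Ri (pm (c *\<^sub>R a)) = c *\<^sub>R Ri (pm a)"
      using Ri_scale[OF pm_in] linear_scale[OF lin_pm] by simp
  qed
  define J where "J = (\<lambda>v. R (pp v) - Ri (pm v))"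
  have linJ: "linear J" unfolding J_def
    using linear_compose_sub[OF linear_compose[OF lin_pp linR] linRim] by (simp add: o_def)
  have ppJ: "pp (J v) = - Ri (pm v)" and pmJ: "pm (J v) = R (pp v)" for v
  proof -
    have e: "J v = (- Ri (pm v)) + R (pp v)" unfolding J_def by simp
    have m: "- Ri (pm v) \<in> Lp" using subspace_neg[OF subp Ri_in[OF pm_in]] .
    show "pp (J v) = - Ri (pm v)" unfolding e by (rule pp_eq(1)[OF m Rm])
    show "pm (J v) = R (pp v)" unfolding e by (rule pp_eq(2)[OF m Rm])
  qed
  have JJ: "J (J v) = - v" for v
  proof -
    have Jd: "J x = R (pp x) - Ri (pm x)" for x unfolding J_def ..
    have "J (J v) = R (- Ri (pm v)) - Ri (R (pp v))" unfolding Jd[of "J v"] ppJ pmJ ..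
    also have "\<dots> = - pm v - pp v" using linear_neg[OF linR] R_Ri[OF pm_in] Ri_R[OF pp_in] by simp
    also have "\<dots> = - v" using pp_pm[of v] by (metis add.commute minus_diff_eq diff_minus_eq_add add_uminus_conv_diff minus_add_distrib)
    finally show ?thesis .
  qed
  have expand: "\<omega> a (J b) = \<omega> (pp a) (X (pp b)) + \<omega> (Ri (pm b)) (X (Ri (pm a)))" for a b
  proof -
    have a: "a = pp a + pm a" using pp_pm[of a] by simp
    have "\<omega> a (J b) = \<omega> (pp a + pm a) (R (pp b) - Ri (pm b))" unfolding J_def using a by simp
    also have "\<dots> = \<omega> (pp a) (R (pp b)) - \<omega> (pp a) (Ri (pm b)) + \<omega> (pm a) (R (pp b)) - \<omega> (pm a) (Ri (pm b))"
      by simp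
    also have "\<omega> (pp a) (Ri (pm b)) = 0" using isop[OF pp_in Ri_in[OF pm_in]] .
    also have "\<omega> (pm a) (R (pp b)) = 0" using isom[OF pm_in Rm] .
    also have "\<omega> (pp a) (R (pp b)) = \<omega> (pp a) (X (pp b))" using omR[OF pp_in] .
    also have "\<omega> (pm a) (Ri (pm b)) = - \<omega> (Ri (pm b)) (X (Ri (pm a)))"
    proof -
      have "pm a = R (Ri (pm a))" using R_Ri[OF pm_in] by simp
      then have "\<omega> (pm a) (Ri (pm b)) = \<omega> (R (Ri (pm a))) (Ri (pm b))" by simp
      also have "\<dots> = - \<omega> (Ri (pm b)) (R (Ri (pm a)))" by (rule anti)
      also have "\<dots> = - \<omega> (Ri (pm b)) (X (Ri (pm a)))" using omR[OF Ri_in[OF pm_in]] by simp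
      finally show ?thesis .
    qed
    finally show ?thesis by simp
  qed
  have JX: "J \<in> XSp \<omega>"
    unfolding XSp_def
  proof (intro CollectI conjI allI impI)
    show "linear J" by (rule linJ)
    fix v show "J (J v) = - v" by (rule JJ)
  next
    fix u v show "\<omega> u (J v) = \<omega> v (J u)"
      unfolding expand using symX[OF pp_in pp_in, of u v] symX[OF Ri_in[OF pm_in] Ri_in[OF pm_in], of v u] by simp
  next
    fix v :: 'v assume v: "v \<noteq> 0"
    have e: "\<omega> v (J v) = \<omega> (pp v) (X (pp v)) + \<omega> (Ri (pm v)) (X (Ri (pm v)))" by (rule expand)
    have nn: "\<omega> u (X u) \<ge> 0" if "u \<in> Lp" for u
      using posX[OF that] by (cases "u = 0") (auto simp: linear_0[OF linX])
    show "\<omega> v (J v) > 0"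
    proof (cases "pp v = 0")
      case True
      then have "pm v \<noteq> 0" using pp_pm[of v] v by auto
      then have "Ri (pm v) \<noteq> 0" using R_Ri[OF pm_in, of v] linear_0[OF linR] by auto
      then show ?thesis unfolding e using posX[OF Ri_in[OF pm_in]] nn[OF pp_in] by (simp add: add_nonneg_pos)
    next
      case False
      then show ?thesis unfolding e using posX[OF pp_in] nn[OF Ri_in[OF pm_in]] by (simp add: add_pos_nonneg)
    qed
  qed
  have Jp: "J u = R u" if "u \<in> Lp" for u
    unfolding J_def using pp_Lp[OF that] pm_Lp[OF that] Ri0 by simp
  have Jm: "J w = - Ri w" if "w \<in> Lm" for w
    unfolding J_def using pp_Lm[OF that] pm_Lm[OF that] linear_0[OF linR] by simp
  have JLp: "J ` Lp = Lm" using Jp imR by (metis image_cong)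
  have JLm: "J ` Lm = Lp"
  proof
    show "J ` Lm \<subseteq> Lp" using Jm Ri_in subspace_neg[OF subp] by auto
    show "Lp \<subseteq> J ` Lm"
    proof
      fix u assume u: "u \<in> Lp"
      have m: "- R u \<in> Lm" using subspace_neg[OF subm Rm] .
      have "Ri (- R u) = - u" using Ri_eq[OF m subspace_neg[OF subp u]] linear_neg[OF linR] by simp
      then have "J (- R u) = u" using Jm[OF m] by simp
      then show "u \<in> J ` Lm" using m by (metis image_eqI)
    qed
  qed
  have "J \<in> YSp \<omega> Lm Lp" unfolding YSp_def using JX JLp JLm by simp
  moreover have "\<forall>u\<in>Lp. \<forall>u'\<in>Lp. \<omega> u (J u') = \<omega> u (X u')" using Jp omR by simp
  ultimately show ?thesis by blast
qed

end

context pairL begin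

lemma YD: assumes "J \<in> YSp \<omega> Lm Lp"
  shows "J \<in> XSp \<omega>" "\<And>u. u \<in> Lp \<Longrightarrow> J u \<in> Lm" "\<And>w. w \<in> Lm \<Longrightarrow> J w \<in> Lp"
  using assms unfolding YSp_def by auto

lemma Y_unique:
  assumes J1: "J1 \<in> YSp \<omega> Lm Lp" and J2: "J2 \<in> YSp \<omega> Lm Lp"
    and eq: "\<And>u u'. u \<in> Lp \<Longrightarrow> u' \<in> Lp \<Longrightarrow> \<omega> u (J1 u') = \<omega> u (J2 u')"
  shows "J1 = J2"
proof -
  note X1 = YD(1)[OF J1] and X2 = YD(1)[OF J2]
  note l1 = XSpD(1)[OF X1] and l2 = XSpD(1)[OF X2]
  have onp: "J1 u' = J2 u'" if u': "u' \<in> Lp" for u'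
  proof -
    have d: "J1 u' - J2 u' \<in> Lm" using subspace_diff[OF subm YD(2)[OF J1 u'] YD(2)[OF J2 u']] .
    have "\<omega> u (J1 u' - J2 u') = 0" if "u \<in> Lp" for u using eq[OF that u'] by simp
    then have "J1 u' - J2 u' = 0" using pair_m[OF d] by blast
    then show ?thesis by simp
  qed
  have onm: "J1 w = J2 w" if w: "w \<in> Lm" for w
  proof -
    define c where "c = - J1 w"
    have c: "c \<in> Lp" unfolding c_def using subspace_neg[OF subp YD(3)[OF J1 w]] .
    have "J1 c = w" unfolding c_def using linear_neg[OF l1] XSpD(2)[OF X1] by simp
    then have "J2 w = J2 (J2 c)" using onp[OF c] by simp
    also have "\<dots> = - c" using XSpD(2)[OF X2] by simp
    finally show ?thesis unfolding c_def by simp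
  qed
  show ?thesis
  proof
    fix v
    have "J1 v = J1 (pp v) + J1 (pm v)" using linear_add[OF l1] pp_pm[of v] by metis
    also have "\<dots> = J2 (pp v) + J2 (pm v)" using onp[OF pp_in] onm[OF pm_in] by simp
    also have "\<dots> = J2 v" using linear_add[OF l2] pp_pm[of v] by metis
    finally show "J1 v = J2 v" .
  qed
qed

definition prj :: "('v \<Rightarrow> 'v) \<Rightarrow> ('v \<Rightarrow> 'v)" where
  "prj J = (THE J'. J' \<in> YSp \<omega> Lm Lp \<and> (\<forall>u\<in>Lp. \<forall>u'\<in>Lp. \<omega> u (J' u') = \<omega> u (J u')))"

lemma prj:
  assumes J: "J \<in> XSp \<omega>"
  shows "prj J \<in> YSp \<omega> Lm Lp" "\<And>u u'. u \<in> Lp \<Longrightarrow> u' \<in> Lp \<Longrightarrow> \<omega> u (prj J u') = \<omega> u (J u')"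
proof -
  have ex: "\<exists>J'\<in>YSp \<omega> Lm Lp. \<forall>u\<in>Lp. \<forall>u'\<in>Lp. \<omega> u (J' u') = \<omega> u (J u')"
    by (rule exists_Y[OF XSpD(1)[OF J] XSpD(3)[OF J] XSpD(4)[OF J]])
  then obtain J0 where J0: "J0 \<in> YSp \<omega> Lm Lp" "\<forall>u\<in>Lp. \<forall>u'\<in>Lp. \<omega> u (J0 u') = \<omega> u (J u')" by blast
  have "\<exists>!J'. J' \<in> YSp \<omega> Lm Lp \<and> (\<forall>u\<in>Lp. \<forall>u'\<in>Lp. \<omega> u (J' u') = \<omega> u (J u'))"
  proof (rule ex1I[of _ J0])
    show "J0 \<in> YSp \<omega> Lm Lp \<and> (\<forall>u\<in>Lp. \<forall>u'\<in>Lp. \<omega> u (J0 u') = \<omega> u (J u'))" using J0 by blast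
    fix J' assume J': "J' \<in> YSp \<omega> Lm Lp \<and> (\<forall>u\<in>Lp. \<forall>u'\<in>Lp. \<omega> u (J' u') = \<omega> u (J u'))"
    show "J' = J0" by (rule Y_unique) (use J' J0 in auto)
  qed
  then have "prj J \<in> YSp \<omega> Lm Lp \<and> (\<forall>u\<in>Lp. \<forall>u'\<in>Lp. \<omega> u (prj J u') = \<omega> u (J u'))"
    unfolding prj_def by (rule theI')
  then show "prj J \<in> YSp \<omega> Lm Lp" "\<And>u u'. u \<in> Lp \<Longrightarrow> u' \<in> Lp \<Longrightarrow> \<omega> u (prj J u') = \<omega> u (J u')"
    by auto
qed

lemma Y_split:
  assumes K: "K \<in> YSp \<omega> Lm Lp"
  shows "\<omega> v (K v) = \<omega> (pp v) (K (pp v)) + \<omega> (pm v) (K (pm v))"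
proof -
  have l: "linear K" using XSpD(1)[OF YD(1)[OF K]] .
  have "\<omega> v (K v) = \<omega> (pp v + pm v) (K (pp v) + K (pm v))"
    using pp_pm[of v] linear_add[OF l, of "pp v" "pm v"] by simp
  also have "\<dots> = \<omega> (pp v) (K (pp v)) + \<omega> (pp v) (K (pm v)) + \<omega> (pm v) (K (pp v)) + \<omega> (pm v) (K (pm v))"
    by simp
  also have "\<omega> (pp v) (K (pm v)) = 0" using isop[OF pp_in YD(3)[OF K pm_in]] .
  also have "\<omega> (pm v) (K (pp v)) = 0" using isom[OF pm_in YD(2)[OF K pp_in]] .
  finally show ?thesis by simp
qed

lemma lipschitz:
  assumes J1: "J1 \<in> XSp \<omega>" and J2: "J2 \<in> XSp \<omega>"
  shows "dSp \<omega> (prj J1) (prj J2) \<le> dSp \<omega> J1 J2"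
proof -
  define M where "M = id_opnorm \<omega> J1 J2"
  have M1: "1 \<le> M" unfolding M_def by (rule opnorm_ge1[OF J1 J2])
  have a: "Jnorm \<omega> J2 x \<le> M * Jnorm \<omega> J1 x" for x unfolding M_def by (rule opnorm_upper[OF J1 J2])
  have b: "Jnorm \<omega> J1 x \<le> M * Jnorm \<omega> J2 x" for x by (rule swap_bound[OF J1 J2 a])
  define K1 where "K1 = prj J1"
  define K2 where "K2 = prj J2"
  have Y1: "K1 \<in> YSp \<omega> Lm Lp" unfolding K1_def by (rule prj(1)[OF J1])
  have Y2: "K2 \<in> YSp \<omega> Lm Lp" unfolding K2_def by (rule prj(1)[OF J2])
  have X1: "K1 \<in> XSp \<omega>" by (rule YD(1)[OF Y1])
  have X2: "K2 \<in> XSp \<omega>" by (rule YD(1)[OF Y2])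
  have n1: "Jnorm \<omega> K1 u = Jnorm \<omega> J1 u" if "u \<in> Lp" for u
    unfolding Jnorm_def K1_def using prj(2)[OF J1 that that] by simp
  have n2: "Jnorm \<omega> K2 u = Jnorm \<omega> J2 u" if "u \<in> Lp" for u
    unfolding Jnorm_def K2_def using prj(2)[OF J2 that that] by simp
  have pp_part: "Jnorm \<omega> K2 u \<le> M * Jnorm \<omega> K1 u" if "u \<in> Lp" for u
    using a[of u] n1[OF that] n2[OF that] by simp
  have pm_part: "Jnorm \<omega> K2 w \<le> M * Jnorm \<omega> K1 w" if w: "w \<in> Lm" for w
  proof -
    define u where "u = - K2 w"
    have u: "u \<in> Lp" unfolding u_def using subspace_neg[OF subp YD(3)[OF Y2 w]] .
    have K2u: "K2 u = w" unfolding u_def using linear_neg[OF XSpD(1)[OF X2]] XSpD(2)[OF X2] by simp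
    have Nu: "Jnorm \<omega> K2 u = Jnorm \<omega> K2 w" unfolding u_def using Jnorm_neg[OF X2] Jnorm_J[OF X2] by simp
    have "(Jnorm \<omega> K2 w)\<^sup>2 = \<omega> u (K2 u)" using Jnorm_sq[OF X2, of u] Nu by simp
    also have "\<dots> = \<omega> u w" using K2u by simp
    also have "\<dots> = \<omega> u (K1 (- K1 w))" using linear_neg[OF XSpD(1)[OF X1]] XSpD(2)[OF X1] by simp
    also have "\<dots> \<le> Jnorm \<omega> K1 u * Jnorm \<omega> K1 (- K1 w)" using CS[OF X1, of u "- K1 w"] by simp
    also have "Jnorm \<omega> K1 (- K1 w) = Jnorm \<omega> K1 w" using Jnorm_neg[OF X1] Jnorm_J[OF X1] by simp
    also have "Jnorm \<omega> K1 u \<le> M * Jnorm \<omega> K2 w"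
      using b[of u] n1[OF u] n2[OF u] Nu by simp
    finally have 1: "(Jnorm \<omega> K2 w)\<^sup>2 \<le> M * Jnorm \<omega> K2 w * Jnorm \<omega> K1 w"
      using Jnorm_nonneg[OF X1, of w] by (simp add: mult_right_mono)
    show ?thesis
    proof (cases "Jnorm \<omega> K2 w = 0")
      case True then show ?thesis using M1 Jnorm_nonneg[OF X1, of w] by simp
    next
      case False
      then have p: "Jnorm \<omega> K2 w > 0" using Jnorm_nonneg[OF X2, of w] by simp
      have "Jnorm \<omega> K2 w * Jnorm \<omega> K2 w \<le> (M * Jnorm \<omega> K1 w) * Jnorm \<omega> K2 w"
        using 1 by (simp add: power2_eq_square algebra_simps)
      then show ?thesis using p by (simp add: mult_le_cancel_right)
    qed
  qed
  have all: "Jnorm \<omega> K2 v \<le> M * Jnorm \<omega> K1 v" for v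
  proof -
    have "(Jnorm \<omega> K2 v)\<^sup>2 = (Jnorm \<omega> K2 (pp v))\<^sup>2 + (Jnorm \<omega> K2 (pm v))\<^sup>2"
      using Y_split[OF Y2, of v] Jnorm_sq[OF X2] by simp
    also have "\<dots> \<le> (M * Jnorm \<omega> K1 (pp v))\<^sup>2 + (M * Jnorm \<omega> K1 (pm v))\<^sup>2"
      using pp_part[OF pp_in, of v] pm_part[OF pm_in, of v] Jnorm_nonneg[OF X2]
      by (intro add_mono power_mono) auto
    also have "\<dots> = M\<^sup>2 * ((Jnorm \<omega> K1 (pp v))\<^sup>2 + (Jnorm \<omega> K1 (pm v))\<^sup>2)"
      by (simp add: power_mult_distrib algebra_simps)
    also have "\<dots> = M\<^sup>2 * (Jnorm \<omega> K1 v)\<^sup>2"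
      using Y_split[OF Y1, of v] Jnorm_sq[OF X1] by simp
    also have "\<dots> = (M * Jnorm \<omega> K1 v)\<^sup>2" by (simp add: power_mult_distrib)
    finally have sq: "(Jnorm \<omega> K2 v)\<^sup>2 \<le> (M * Jnorm \<omega> K1 v)\<^sup>2" .
    have "0 \<le> M * Jnorm \<omega> K1 v" using M1 Jnorm_nonneg[OF X1, of v] by simp
    then show ?thesis by (rule power2_le_imp_le[OF sq])
  qed
  have "dSp \<omega> K1 K2 \<le> 2 * ln M" by (rule dSp_le[OF X1 X2 all])
  also have "2 * ln M = dSp \<omega> J1 J2" unfolding M_def using dSp_eq[OF J1 J2] by simp
  finally show ?thesis unfolding K1_def K2_def .
qed

end

context symp begin

lemma SpD: assumes "A \<in> Sp \<omega>" shows "linear A" "\<And>u v. \<omega> (A u) (A v) = \<omega> u v"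
  using assms unfolding Sp_def by auto

lemma Sp_inj: assumes A: "A \<in> Sp \<omega>" shows "inj A"
  unfolding linear_injective_0[OF SpD(1)[OF A]]
proof (intro allI impI)
  fix x assume x: "A x = 0"
  have "\<omega> x y = 0" for y using SpD(2)[OF A, of x y] x by simp
  then show "x = 0" using nondeg by blast
qed

lemma Sp_surj: assumes A: "A \<in> Sp \<omega>" shows "surj A"
  by (rule linear_inj_imp_surj[OF SpD(1)[OF A] Sp_inj[OF A]])

lemma Sp_inv:
  assumes A: "A \<in> Sp \<omega>"
  shows "\<And>x. A (Hilbert_Choice.inv A x) = x" "\<And>x. Hilbert_Choice.inv A (A x) = x" "linear (Hilbert_Choice.inv A)"
    "\<And>x y. \<omega> (Hilbert_Choice.inv A x) (Hilbert_Choice.inv A y) = \<omega> x y" "\<And>u y. \<omega> u (A y) = \<omega> (Hilbert_Choice.inv A u) y"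
proof -
  show AA: "\<And>x. A (Hilbert_Choice.inv A x) = x" using surj_f_inv_f[OF Sp_surj[OF A]] by blast
  show AA2: "\<And>x. Hilbert_Choice.inv A (A x) = x" using inv_f_f[OF Sp_inj[OF A]] by blast
  note l = SpD(1)[OF A]
  show "linear (Hilbert_Choice.inv A)"
  proof (rule linearI)
    fix x y show "Hilbert_Choice.inv A (x + y) = Hilbert_Choice.inv A x + Hilbert_Choice.inv A y"
      using AA2[of "Hilbert_Choice.inv A x + Hilbert_Choice.inv A y"] linear_add[OF l, of "Hilbert_Choice.inv A x" "Hilbert_Choice.inv A y"] AA by simp
  next
    fix c x show "Hilbert_Choice.inv A (c *\<^sub>R x) = c *\<^sub>R Hilbert_Choice.inv A x"
      using AA2[of "c *\<^sub>R Hilbert_Choice.inv A x"] linear_scale[OF l, of c "Hilbert_Choice.inv A x"] AA by simp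
  qed
  show "\<And>x y. \<omega> (Hilbert_Choice.inv A x) (Hilbert_Choice.inv A y) = \<omega> x y" using SpD(2)[OF A] AA by metis
  show "\<And>u y. \<omega> u (A y) = \<omega> (Hilbert_Choice.inv A u) y" using SpD(2)[OF A] AA by metis
qed

lemma sp_act_app: "sp_act A J v = A (J (Hilbert_Choice.inv A v))" unfolding sp_act_def by simp

lemma sp_act_X:
  assumes A: "A \<in> Sp \<omega>" and J: "J \<in> XSp \<omega>"
  shows "sp_act A J \<in> XSp \<omega>"
  unfolding XSp_def
proof (intro CollectI conjI allI impI)
  note lA = SpD(1)[OF A] and lAi = Sp_inv(3)[OF A] and lJ = XSpD(1)[OF J]
  show "linear (sp_act A J)" unfolding sp_act_def
    by (intro linear_compose[OF lAi] linear_compose[OF lJ lA] linear_compose[OF _ lA])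
next
  fix v show "sp_act A J (sp_act A J v) = - v"
    unfolding sp_act_app using Sp_inv(1,2)[OF A] XSpD(2)[OF J] linear_neg[OF SpD(1)[OF A]] by simp
next
  fix u v show "\<omega> u (sp_act A J v) = \<omega> v (sp_act A J u)"
    unfolding sp_act_app Sp_inv(5)[OF A] using XSpD(3)[OF J] by simp
next
  fix v :: 'v assume v: "v \<noteq> 0"
  have "Hilbert_Choice.inv A v \<noteq> 0" using v Sp_inv(1)[OF A, of v] linear_0[OF SpD(1)[OF A]] by auto
  then show "\<omega> v (sp_act A J v) > 0"
    unfolding sp_act_app Sp_inv(5)[OF A] using XSpD(4)[OF J] by simp
qed

end

context pairL begin

lemma inv_pres:
  assumes A: "A \<in> Sp \<omega>" and e: "A ` L = L"
  shows "Hilbert_Choice.inv A ` L = L"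
proof -
  have "Hilbert_Choice.inv A ` (A ` L) = L" using Sp_inv(2)[OF A] by (simp add: image_comp o_def)
  then show ?thesis using e by simp
qed

lemma sp_act_Y:
  assumes A: "A \<in> Sp \<omega>" and ep: "A ` Lp = Lp" and em: "A ` Lm = Lm" and J: "J \<in> YSp \<omega> Lm Lp"
  shows "sp_act A J \<in> YSp \<omega> Lm Lp"
proof -
  have X: "sp_act A J \<in> XSp \<omega>" using sp_act_X[OF A YD(1)[OF J]] .
  have img: "sp_act A J ` L = A ` (J ` (Hilbert_Choice.inv A ` L))" for L unfolding sp_act_def by (simp add: image_comp)
  have "sp_act A J ` Lp = Lm" unfolding img inv_pres[OF A ep] using J ep em unfolding YSp_def by simp
  moreover have "sp_act A J ` Lm = Lp" unfolding img inv_pres[OF A em] using J ep em unfolding YSp_def by simp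
  ultimately show ?thesis using X unfolding YSp_def by simp
qed

lemma prj_equiv:
  assumes A: "A \<in> Sp \<omega>" and ep: "A ` Lp = Lp" and em: "A ` Lm = Lm" and J: "J \<in> XSp \<omega>"
  shows "prj (sp_act A J) = sp_act A (prj J)"
proof (rule Y_unique)
  have XA: "sp_act A J \<in> XSp \<omega>" by (rule sp_act_X[OF A J])
  show "prj (sp_act A J) \<in> YSp \<omega> Lm Lp" by (rule prj(1)[OF XA])
  show "sp_act A (prj J) \<in> YSp \<omega> Lm Lp" by (rule sp_act_Y[OF A ep em prj(1)[OF J]])
  fix u u' assume u: "u \<in> Lp" and u': "u' \<in> Lp"
  have iu: "Hilbert_Choice.inv A u \<in> Lp" using u inv_pres[OF A ep] by blast
  have iu': "Hilbert_Choice.inv A u' \<in> Lp" using u' inv_pres[OF A ep] by blast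
  have "\<omega> u (prj (sp_act A J) u') = \<omega> u (sp_act A J u')" by (rule prj(2)[OF XA u u'])
  also have "\<dots> = \<omega> (Hilbert_Choice.inv A u) (J (Hilbert_Choice.inv A u'))" unfolding sp_act_app Sp_inv(5)[OF A] ..
  also have "\<dots> = \<omega> (Hilbert_Choice.inv A u) (prj J (Hilbert_Choice.inv A u'))" using prj(2)[OF J iu iu'] by simp
  also have "\<dots> = \<omega> u (sp_act A (prj J) u')" unfolding sp_act_app Sp_inv(5)[OF A] ..
  finally show "\<omega> u (prj (sp_act A J) u') = \<omega> u (sp_act A (prj J) u')" .
qed

definition Om :: "'v \<Rightarrow> 'v" where "Om v = (\<Sum>b\<in>Basis. \<omega> b v *\<^sub>R b)"

lemma Om_inner: "\<omega> u v = inner u (Om v)"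
proof -
  have l: "linear (\<lambda>x. \<omega> x v)" using bil unfolding bilinear_def by blast
  have "\<omega> u v = \<omega> (\<Sum>b\<in>Basis. (u \<bullet> b) *\<^sub>R b) v" by (simp add: euclidean_representation)
  also have "\<dots> = (\<Sum>b\<in>Basis. (u \<bullet> b) * \<omega> b v)"
    using linear_sum[OF l, of "\<lambda>b. (u \<bullet> b) *\<^sub>R b" Basis] by simp
  also have "\<dots> = inner u (Om v)" unfolding Om_def by (simp add: inner_sum_right mult.commute)
  finally show ?thesis .
qed

lemma lin_Om: "linear Om"
proof (rule linearI)
  fix x y show "Om (x + y) = Om x + Om y" unfolding Om_def by (simp add: scaleR_add_left sum.distrib)
next
  fix c x show "Om (c *\<^sub>R x) = c *\<^sub>R Om x" unfolding Om_def by (simp add: scaleR_sum_right)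
qed

lemma Y_nonempty: "YSp \<omega> Lm Lp \<noteq> {}"
proof -
  define X where "X = (\<lambda>v. - Om v)"
  have linX: "linear X" unfolding X_def using linear_compose_neg[OF lin_Om] by simp
  have key: "\<omega> u (X u') = inner (Om u') (Om u)" for u u'
  proof -
    have "\<omega> u (X u') = - inner u (Om (Om u'))" unfolding X_def Om_inner[of u "- Om u'"]
      using linear_neg[OF lin_Om] by simp
    also have "inner u (Om (Om u')) = \<omega> u (Om u')" using Om_inner by simp
    also have "\<dots> = - \<omega> (Om u') u" by (rule anti)
    also have "\<omega> (Om u') u = inner (Om u') (Om u)" by (rule Om_inner)
    finally show ?thesis by simp
  qed
  have sym: "\<omega> u (X u') = \<omega> u' (X u)" for u u' unfolding key by (simp add: inner_commute)
  have pos: "\<omega> u (X u) > 0" if "u \<noteq> 0" for u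
  proof -
    have "Om u \<noteq> 0"
    proof
      assume "Om u = 0"
      then have "\<omega> y u = 0" for y using Om_inner by simp
      then have "\<omega> u y = 0" for y using anti by (metis neg_equal_0_iff_equal)
      then show False using nondeg that by blast
    qed
    then show ?thesis unfolding key by simp
  qed
  obtain J where "J \<in> YSp \<omega> Lm Lp" using exists_Y[OF linX sym pos] by blast
  then show ?thesis by blast
qed

theorem partB:
  assumes A: "A \<in> Sp \<omega>" and ep: "A ` Lp = Lp" and em: "A ` Lm = Lm"
  shows "translength \<omega> A = (INF J\<in>YSp \<omega> Lm Lp. dSp \<omega> J (sp_act A J))"
proof -
  define f where "f = (\<lambda>J. dSp \<omega> J (sp_act A J))"
  have f0: "0 \<le> f J" for J unfolding f_def dSp_def by simp
  have YX: "YSp \<omega> Lm Lp \<subseteq> XSp \<omega>" unfolding YSp_def by blast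
  have Yne: "YSp \<omega> Lm Lp \<noteq> {}" by (rule Y_nonempty)
  have bX: "bdd_below (f ` XSp \<omega>)" using f0 by (intro bdd_belowI2) auto
  have bY: "bdd_below (f ` YSp \<omega> Lm Lp)" using f0 by (intro bdd_belowI2) auto
  have le1: "(INF J\<in>XSp \<omega>. f J) \<le> (INF J\<in>YSp \<omega> Lm Lp. f J)"
    by (rule cINF_superset_mono[OF Yne bX YX]) simp
  have le2: "(INF J\<in>YSp \<omega> Lm Lp. f J) \<le> (INF J\<in>XSp \<omega>. f J)"
  proof (rule cINF_greatest)
    show "XSp \<omega> \<noteq> {}" using Yne YX by blast
    fix J assume J: "J \<in> XSp \<omega>"
    have XA: "sp_act A J \<in> XSp \<omega>" by (rule sp_act_X[OF A J])
    have PY: "prj J \<in> YSp \<omega> Lm Lp" by (rule prj(1)[OF J])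
    have "(INF J\<in>YSp \<omega> Lm Lp. f J) \<le> f (prj J)" by (rule cINF_lower[OF bY PY])
    also have "f (prj J) = dSp \<omega> (prj J) (prj (sp_act A J))"
      unfolding f_def prj_equiv[OF A ep em J] ..
    also have "\<dots> \<le> dSp \<omega> J (sp_act A J)" by (rule lipschitz[OF J XA])
    finally show "(INF J\<in>YSp \<omega> Lm Lp. f J) \<le> f J" unfolding f_def .
  qed
  show ?thesis unfolding translength_def using le1 le2 unfolding f_def by simp
qed

end

lemma cnorm_sq: "complex_of_real ((cmod z)\<^sup>2) = z * cnj z"
  by (rule complex_norm_square)

lemma det_cpx: assumes "(cmod a)\<^sup>2 - (cmod b)\<^sup>2 = 1" shows "a * cnj a - b * cnj b = 1"
proof -
  have "complex_of_real ((cmod a)\<^sup>2 - (cmod b)\<^sup>2) = 1" using assms by simp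
  then show ?thesis by (simp only: of_real_diff cnorm_sq)
qed

lemma a_gt_b: assumes "(cmod a)\<^sup>2 - (cmod b)\<^sup>2 = 1" shows "cmod b < cmod a"
proof -
  have "(cmod b)\<^sup>2 < (cmod a)\<^sup>2" using assms by simp
  then show ?thesis by (simp add: power_less_imp_less_base)
qed

lemma denom_nz:
  assumes det: "(cmod a)\<^sup>2 - (cmod b)\<^sup>2 = 1" and z: "cmod z \<le> 1"
  shows "cnj b * z + cnj a \<noteq> 0"
proof -
  have "cmod (cnj b * z) \<le> cmod b" using z by (simp add: norm_mult mult_left_le)
  also have "\<dots> < cmod a" by (rule a_gt_b[OF det])
  finally have "cmod (cnj b * z) < cmod (cnj a)" by simp
  then show ?thesis by (metis add.commute add_eq_0_iff norm_minus_cancel order_less_irrefl)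
qed

lemma denom_lower:
  assumes det: "(cmod a)\<^sup>2 - (cmod b)\<^sup>2 = 1" and z: "cmod z \<le> r"
  shows "cmod a - cmod b * r \<le> cmod (cnj b * z + cnj a)"
proof -
  have "cmod (cnj b * z) \<le> cmod b * r" using z by (simp add: norm_mult mult_left_mono)
  moreover have "cmod (cnj a) - cmod (cnj b * z) \<le> cmod (cnj b * z + cnj a)"
    by (metis add.commute norm_diff_ineq)
  ultimately show ?thesis by simp
qed

lemma norm_id_cpx:
  "(cnj b * z + cnj a) * cnj (cnj b * z + cnj a) - (a * z + b) * cnj (a * z + b)
   = (a * cnj a - b * cnj b) * (1 - z * cnj z)"
  by (simp add: algebra_simps)

lemma norm_id:
  "(cmod (cnj b * z + cnj a))\<^sup>2 - (cmod (a * z + b))\<^sup>2 = ((cmod a)\<^sup>2 - (cmod b)\<^sup>2) * (1 - (cmod z)\<^sup>2)"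
proof -
  have "complex_of_real ((cmod (cnj b * z + cnj a))\<^sup>2 - (cmod (a * z + b))\<^sup>2)
      = complex_of_real (((cmod a)\<^sup>2 - (cmod b)\<^sup>2) * (1 - (cmod z)\<^sup>2))"
    unfolding of_real_diff of_real_mult of_real_1 cnorm_sq by (rule norm_id_cpx)
  then show ?thesis using of_real_eq_iff by blast
qed

lemma mob_one_minus:
  assumes det: "(cmod a)\<^sup>2 - (cmod b)\<^sup>2 = 1" and z: "cmod z \<le> 1"
  shows "1 - (cmod (mob a b z))\<^sup>2 = (1 - (cmod z)\<^sup>2) / (cmod (cnj b * z + cnj a))\<^sup>2"
proof -
  let ?D = "cnj b * z + cnj a"
  have D: "cmod ?D \<noteq> 0" using denom_nz[OF det z] by simp
  have "(cmod (mob a b z))\<^sup>2 = (cmod (a * z + b))\<^sup>2 / (cmod ?D)\<^sup>2"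
    unfolding mob_def by (simp add: norm_divide power_divide)
  then have "1 - (cmod (mob a b z))\<^sup>2 = ((cmod ?D)\<^sup>2 - (cmod (a * z + b))\<^sup>2) / (cmod ?D)\<^sup>2"
    using D by (simp add: field_simps)
  also have "\<dots> = (1 - (cmod z)\<^sup>2) / (cmod ?D)\<^sup>2" using norm_id[of b z a] det by simp
  finally show ?thesis .
qed

lemma mob_cball: assumes det: "(cmod a)\<^sup>2 - (cmod b)\<^sup>2 = 1" and z: "cmod z \<le> 1"
  shows "cmod (mob a b z) \<le> 1"
proof -
  have "0 \<le> (1 - (cmod z)\<^sup>2) / (cmod (cnj b * z + cnj a))\<^sup>2"
    using z by (simp add: abs_square_le_1)
  then have "(cmod (mob a b z))\<^sup>2 \<le> 1" using mob_one_minus[OF det z] by simp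
  then show ?thesis by (simp add: abs_square_le_1)
qed

lemma mob_ball: assumes det: "(cmod a)\<^sup>2 - (cmod b)\<^sup>2 = 1" and z: "cmod z < 1"
  shows "cmod (mob a b z) < 1"
proof -
  have D: "cmod (cnj b * z + cnj a) \<noteq> 0" using denom_nz[OF det] z by simp
  have "0 < (1 - (cmod z)\<^sup>2) / (cmod (cnj b * z + cnj a))\<^sup>2"
    using z D by (simp add: abs_square_less_1)
  then have "(cmod (mob a b z))\<^sup>2 < 1" using mob_one_minus[OF det less_imp_le[OF z]] by simp
  then show ?thesis by (simp add: abs_square_less_1)
qed

lemma mob_diff:
  assumes det: "(cmod a)\<^sup>2 - (cmod b)\<^sup>2 = 1" and z: "cmod z \<le> 1" and w: "cmod w \<le> 1"
  shows "mob a b z - mob a b w = (z - w) / ((cnj b * z + cnj a) * (cnj b * w + cnj a))"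
proof -
  have Dz: "cnj b * z + cnj a \<noteq> 0" by (rule denom_nz[OF det z])
  have Dw: "cnj b * w + cnj a \<noteq> 0" by (rule denom_nz[OF det w])
  have d1: "a * cnj a - b * cnj b = 1" by (rule det_cpx[OF det])
  have "mob a b z - mob a b w = ((a * z + b) * (cnj b * w + cnj a) - (a * w + b) * (cnj b * z + cnj a))
          / ((cnj b * z + cnj a) * (cnj b * w + cnj a))"
    unfolding mob_def using Dz Dw by (simp add: field_simps)
  also have "(a * z + b) * (cnj b * w + cnj a) - (a * w + b) * (cnj b * z + cnj a) = (a * cnj a - b * cnj b) * (z - w)"
    by (simp add: algebra_simps)
  finally show ?thesis using d1 by simp
qed

lemma mob_inj:
  assumes det: "(cmod a)\<^sup>2 - (cmod b)\<^sup>2 = 1" and z: "cmod z \<le> 1" and w: "cmod w \<le> 1"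
    and eq: "mob a b z = mob a b w"
  shows "z = w"
  using mob_diff[OF det z w] eq denom_nz[OF det z] denom_nz[OF det w] by simp

lemma mob_comp:
  assumes d1: "(cmod a)\<^sup>2 - (cmod b)\<^sup>2 = 1" and d2: "(cmod c)\<^sup>2 - (cmod d)\<^sup>2 = 1" and z: "cmod z \<le> 1"
  shows "mob a b (mob c d z) = mob (a * c + b * cnj d) (a * d + b * cnj c) z"
proof -
  have D1: "cnj d * z + cnj c \<noteq> 0" by (rule denom_nz[OF d2 z])
  have w: "cmod (mob c d z) \<le> 1" by (rule mob_cball[OF d2 z])
  have D2: "cnj b * mob c d z + cnj a \<noteq> 0" by (rule denom_nz[OF d1 w])
  have e: "cnj b * mob c d z + cnj a = ((cnj b * c + cnj a * cnj d) * z + (cnj b * d + cnj a * cnj c)) / (cnj d * z + cnj c)"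
    unfolding mob_def using D1 by (simp add: field_simps)
  have e2: "a * mob c d z + b = ((a * c + b * cnj d) * z + (a * d + b * cnj c)) / (cnj d * z + cnj c)"
    unfolding mob_def using D1 by (simp add: field_simps)
  have n: "(cnj b * c + cnj a * cnj d) * z + (cnj b * d + cnj a * cnj c) \<noteq> 0"
    using D2 e D1 by auto
  let ?N = "(a * c + b * cnj d) * z + (a * d + b * cnj c)"
  let ?M = "(cnj b * c + cnj a * cnj d) * z + (cnj b * d + cnj a * cnj c)"
  have "mob a b (mob c d z) = (a * mob c d z + b) / (cnj b * mob c d z + cnj a)" unfolding mob_def ..
  also have "\<dots> = (?N / (cnj d * z + cnj c)) / (?M / (cnj d * z + cnj c))" by (simp only: e e2)
  also have "\<dots> = ?N / ?M" using D1 by simp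
  also have "\<dots> = mob (a * c + b * cnj d) (a * d + b * cnj c) z"
    unfolding mob_def by (simp add: algebra_simps)
  finally show ?thesis .
qed

lemma det_comp_cpx:
  "(a * c + b * cnj d) * cnj (a * c + b * cnj d) - (a * d + b * cnj c) * cnj (a * d + b * cnj c)
   = (a * cnj a - b * cnj b) * (c * cnj c - d * cnj d)"
  by (simp add: algebra_simps)

lemma det_comp:
  assumes d1: "(cmod a)\<^sup>2 - (cmod b)\<^sup>2 = 1" and d2: "(cmod c)\<^sup>2 - (cmod d)\<^sup>2 = 1"
  shows "(cmod (a * c + b * cnj d))\<^sup>2 - (cmod (a * d + b * cnj c))\<^sup>2 = 1"
proof -
  have "complex_of_real ((cmod (a * c + b * cnj d))\<^sup>2 - (cmod (a * d + b * cnj c))\<^sup>2)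
      = complex_of_real (((cmod a)\<^sup>2 - (cmod b)\<^sup>2) * ((cmod c)\<^sup>2 - (cmod d)\<^sup>2))"
    unfolding of_real_diff of_real_mult cnorm_sq by (rule det_comp_cpx)
  then show ?thesis using d1 d2 of_real_eq_iff by fastforce
qed

lemma mob_inv_comp:
  assumes d: "(cmod a)\<^sup>2 - (cmod b)\<^sup>2 = 1" and z: "cmod z \<le> 1"
  shows "mob a b (mob (cnj a) (- b) z) = z"
proof -
  have d': "(cmod (cnj a))\<^sup>2 - (cmod (- b))\<^sup>2 = 1" using d by simp
  have "mob a b (mob (cnj a) (- b) z) = mob (a * cnj a + b * cnj (- b)) (a * (- b) + b * cnj (cnj a)) z"
    by (rule mob_comp[OF d d' z])
  also have "a * cnj a + b * cnj (- b) = 1" using det_cpx[OF d] by simp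
  also have "a * (- b) + b * cnj (cnj a) = 0" by simp
  finally show ?thesis unfolding mob_def by simp
qed

definition hdist :: "complex \<Rightarrow> complex \<Rightarrow> real" where
  "hdist z w = (cmod (z - w))\<^sup>2 / ((1 - (cmod z)\<^sup>2) * (1 - (cmod w)\<^sup>2))"

lemma hd_inv:
  assumes d: "(cmod a)\<^sup>2 - (cmod b)\<^sup>2 = 1" and z: "cmod z < 1" and w: "cmod w < 1"
  shows "hdist (mob a b z) (mob a b w) = hdist z w"
proof -
  let ?Dz = "cnj b * z + cnj a" and ?Dw = "cnj b * w + cnj a"
  have Dz: "cmod ?Dz > 0" using denom_nz[OF d] z by simp
  have Dw: "cmod ?Dw > 0" using denom_nz[OF d] w by simp
  have z1: "1 - (cmod z)\<^sup>2 > 0" using z by (simp add: abs_square_less_1)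
  have w1: "1 - (cmod w)\<^sup>2 > 0" using w by (simp add: abs_square_less_1)
  have e1: "(cmod (mob a b z - mob a b w))\<^sup>2 = (cmod (z - w))\<^sup>2 / ((cmod ?Dz)\<^sup>2 * (cmod ?Dw)\<^sup>2)"
    using mob_diff[OF d less_imp_le[OF z] less_imp_le[OF w]] by (simp add: norm_divide norm_mult power_divide power_mult_distrib)
  have e2: "1 - (cmod (mob a b z))\<^sup>2 = (1 - (cmod z)\<^sup>2) / (cmod ?Dz)\<^sup>2" using mob_one_minus[OF d less_imp_le[OF z]] .
  have e3: "1 - (cmod (mob a b w))\<^sup>2 = (1 - (cmod w)\<^sup>2) / (cmod ?Dw)\<^sup>2" using mob_one_minus[OF d less_imp_le[OF w]] .
  have "hdist (mob a b z) (mob a b w) = ((cmod (z - w))\<^sup>2 / ((cmod ?Dz)\<^sup>2 * (cmod ?Dw)\<^sup>2)) /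
      (((1 - (cmod z)\<^sup>2) / (cmod ?Dz)\<^sup>2) * ((1 - (cmod w)\<^sup>2) / (cmod ?Dw)\<^sup>2))"
    unfolding hdist_def e1 e2 e3 ..
  also have "\<dots> = hdist z w" unfolding hdist_def using Dz Dw z1 w1 by (simp add: field_simps)
  finally show ?thesis .
qed

locale hyp = group G for G :: "('g, 'm) monoid_scheme" (structure) +
  fixes h :: "'g \<Rightarrow> complex \<Rightarrow> complex"
  assumes hyperb: "hyperbolization G h"
begin

lemma hm: "x \<in> carrier G \<Longrightarrow> \<exists>a b. is_mob a b (h x)"
  using hyperb unfolding hyperbolization_def by blast

lemma is_mobD: assumes "is_mob a b f"
  shows "(cmod a)\<^sup>2 - (cmod b)\<^sup>2 = 1" "\<And>z. cmod z \<le> 1 \<Longrightarrow> f z = mob a b z"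
  using assms unfolding is_mob_def by auto

lemma hmul: "x \<in> carrier G \<Longrightarrow> y \<in> carrier G \<Longrightarrow> cmod z \<le> 1 \<Longrightarrow> h (x \<otimes> y) z = h x (h y z)"
  using hyperb unfolding hyperbolization_def by auto

lemma hcb: assumes x: "x \<in> carrier G" and z: "cmod z \<le> 1" shows "cmod (h x z) \<le> 1"
proof -
  obtain a b where m: "is_mob a b (h x)" using hm[OF x] by blast
  show ?thesis using is_mobD[OF m] mob_cball z by simp
qed

lemma hb: assumes x: "x \<in> carrier G" and z: "cmod z < 1" shows "cmod (h x z) < 1"
proof -
  obtain a b where m: "is_mob a b (h x)" using hm[OF x] by blast
  show ?thesis using is_mobD[OF m] mob_ball z by simp
qed

lemma hone: assumes z: "cmod z \<le> 1" shows "h \<one> z = z"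
proof -
  obtain a b where m: "is_mob a b (h \<one>)" using hm[OF one_closed] by blast
  have "h \<one> (h \<one> z) = h \<one> z" using hmul[OF one_closed one_closed z] by simp
  moreover have c: "cmod (h \<one> z) \<le> 1" by (rule hcb[OF one_closed z])
  ultimately have "mob a b (h \<one> z) = mob a b z" using is_mobD(2)[OF m] c z by simp
  then show ?thesis using mob_inj[OF is_mobD(1)[OF m] c z] by simp
qed

lemma hinv1: assumes x: "x \<in> carrier G" and z: "cmod z \<le> 1" shows "h (inv x) (h x z) = z"
  using hmul[OF inv_closed[OF x] x z] hone[OF z] l_inv[OF x] by simp

lemma hinv2: assumes x: "x \<in> carrier G" and z: "cmod z \<le> 1" shows "h x (h (inv x) z) = z"
  using hmul[OF x inv_closed[OF x] z] hone[OF z] r_inv[OF x] by simp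

lemma hinv_mob: assumes x: "x \<in> carrier G" and m: "is_mob a b (h x)"
  shows "is_mob (cnj a) (- b) (h (inv x))"
  unfolding is_mob_def
proof (intro conjI ballI)
  have d: "(cmod a)\<^sup>2 - (cmod b)\<^sup>2 = 1" by (rule is_mobD(1)[OF m])
  show "(cmod (cnj a))\<^sup>2 - (cmod (- b))\<^sup>2 = 1" using d by simp
  fix z :: complex assume "z \<in> cball 0 1"
  then have z: "cmod z \<le> 1" by simp
  have d': "(cmod (cnj a))\<^sup>2 - (cmod (- b))\<^sup>2 = 1" using d by simp
  have w: "cmod (mob (cnj a) (- b) z) \<le> 1" by (rule mob_cball[OF d' z])
  have "h x (mob (cnj a) (- b) z) = z" using is_mobD(2)[OF m w] mob_inv_comp[OF d z] by simp
  then have "h (inv x) z = h (inv x) (h x (mob (cnj a) (- b) z))" by simp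
  also have "\<dots> = mob (cnj a) (- b) z" by (rule hinv1[OF x w])
  finally show "h (inv x) z = mob (cnj a) (- b) z" .
qed

lemma hcomp_mob:
  assumes x: "x \<in> carrier G" and y: "y \<in> carrier G" and mx: "is_mob a b (h x)" and my: "is_mob c d (h y)"
  shows "is_mob (a * c + b * cnj d) (a * d + b * cnj c) (h (x \<otimes> y))"
  unfolding is_mob_def
proof (intro conjI ballI)
  show "(cmod (a * c + b * cnj d))\<^sup>2 - (cmod (a * d + b * cnj c))\<^sup>2 = 1"
    by (rule det_comp[OF is_mobD(1)[OF mx] is_mobD(1)[OF my]])
  fix z :: complex assume "z \<in> cball 0 1"
  then have z: "cmod z \<le> 1" by simp
  have "h (x \<otimes> y) z = h x (h y z)" by (rule hmul[OF x y z])
  also have "\<dots> = mob a b (mob c d z)"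
    using is_mobD(2)[OF my z] is_mobD(2)[OF mx] hcb[OF y z] by simp
  also have "\<dots> = mob (a * c + b * cnj d) (a * d + b * cnj c) z"
    by (rule mob_comp[OF is_mobD(1)[OF mx] is_mobD(1)[OF my] z])
  finally show "h (x \<otimes> y) z = mob (a * c + b * cnj d) (a * d + b * cnj c) z" .
qed

lemma faithful: "x \<in> carrier G \<Longrightarrow> (\<And>z. cmod z \<le> 1 \<Longrightarrow> h x z = z) \<Longrightarrow> x = \<one>"
  using hyperb unfolding hyperbolization_def by auto

lemma discrete: "\<exists>\<epsilon>>0. \<forall>x\<in>carrier G. \<forall>\<alpha> \<beta>. is_mob \<alpha> \<beta> (h x) \<and> cmod (\<alpha> - 1) < \<epsilon> \<and> cmod \<beta> < \<epsilon>
         \<longrightarrow> (\<forall>z\<in>cball 0 1. h x z = z)"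
  using hyperb unfolding hyperbolization_def by blast

lemma cocompact: "\<exists>K. compact K \<and> K \<subseteq> ball 0 1 \<and> (\<forall>z\<in>ball 0 1. \<exists>x\<in>carrier G. \<exists>k\<in>K. z = h x k)"
  using hyperb unfolding hyperbolization_def by auto

lemma hpow_ball: assumes x: "x \<in> carrier G" and z: "cmod z < 1" shows "cmod ((h x ^^ n) z) < 1"
  by (induction n) (use z hb[OF x] in auto)

end

lemma no_repel:
  fixes w :: "nat \<Rightarrow> complex"
  assumes wb: "\<And>k. cmod (w k) < 1" and p: "cmod p = 1" and lim: "w \<longlonglongrightarrow> p"
    and ev: "eventually (\<lambda>k. cmod (w k - p) \<le> cmod (w (Suc k) - p)) sequentially"
  shows False
proof -
  obtain N where N: "\<And>k. k \<ge> N \<Longrightarrow> cmod (w k - p) \<le> cmod (w (Suc k) - p)"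
    using ev unfolding eventually_sequentially by blast
  have mono: "cmod (w N - p) \<le> cmod (w (N + k) - p)" for k
  proof (induction k)
    case 0 then show ?case by simp
  next
    case (Suc k) then show ?case using N[of "N + k"] by simp
  qed
  have "w N \<noteq> p" using wb[of N] p by auto
  then have c: "cmod (w N - p) > 0" by simp
  obtain no where no: "\<And>n. n \<ge> no \<Longrightarrow> cmod (w n - p) < cmod (w N - p)"
    using lim c unfolding LIMSEQ_iff by blast
  have "cmod (w (N + no) - p) < cmod (w N - p)" using no[of "N + no"] by simp
  then show False using mono[of no] by simp
qed

lemma unit_cnj: assumes "cmod p = 1" shows "p * cnj p = 1"
  using cnorm_sq[of p] assms by simp

lemma parab_identity:
  assumes p: "cmod p = 1" and det: "(cmod \<alpha>)\<^sup>2 - (cmod \<beta>)\<^sup>2 = 1"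
    and D1: "cmod (cnj \<beta> * p + cnj \<alpha>) = 1" and fp: "mob \<alpha> \<beta> p = p"
  shows "\<alpha> * z + \<beta> - z * (cnj \<beta> * z + cnj \<alpha>) = - cnj \<beta> * (z - p)\<^sup>2"
proof -
  define D where "D = cnj \<beta> * p + cnj \<alpha>"
  have pp: "p * cnj p = 1" by (rule unit_cnj[OF p])
  have Dnz: "D \<noteq> 0" using D1 D_def by auto
  have DD: "D * cnj D = 1" using unit_cnj[OF D1] D_def by simp
  have e1: "\<alpha> * p + \<beta> = p * D" using fp Dnz unfolding mob_def D_def by (simp add: field_simps)
  have "(\<alpha> * p + \<beta>) * cnj p = p * D * cnj p" using e1 by simp
  then have e2: "\<alpha> + \<beta> * cnj p = D" using pp by (simp add: algebra_simps)
  have e3: "cnj D = \<beta> * cnj p + \<alpha>" unfolding D_def by simp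
  have real: "cnj D = D" using e2 e3 by (simp add: algebra_simps)
  have sa: "\<alpha> = D - \<beta> * cnj p" using e2 by (simp add: algebra_simps)
  have sca: "cnj \<alpha> = D - cnj \<beta> * p" unfolding D_def by simp
  have DD2: "D * D = 1" using DD real by simp
  have dc: "\<alpha> * cnj \<alpha> - \<beta> * cnj \<beta> = 1" by (rule det_cpx[OF det])
  have "(D - \<beta> * cnj p) * (D - cnj \<beta> * p) - \<beta> * cnj \<beta> = 1" using dc sa sca by simp
  then have "D * D - D * (cnj \<beta> * p + \<beta> * cnj p) + \<beta> * cnj \<beta> * (p * cnj p) - \<beta> * cnj \<beta> = 1"
    by (simp add: algebra_simps)
  then have "D * (cnj \<beta> * p + \<beta> * cnj p) = 0" using DD2 pp by simp
  then have s1: "cnj \<beta> * p + \<beta> * cnj p = 0" using Dnz by simp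
  have z1: "\<alpha> + \<beta> * cnj p - D = 0" using e2 by simp
  have z2: "cnj \<alpha> + cnj \<beta> * p - D = 0" using sca by simp
  have "\<alpha> - cnj \<alpha> - 2 * cnj \<beta> * p = (\<alpha> + \<beta> * cnj p - D) - (cnj \<alpha> + cnj \<beta> * p - D) - (cnj \<beta> * p + \<beta> * cnj p)"
    by (simp add: algebra_simps)
  also have "\<dots> = 0" unfolding z1 z2 s1 by simp
  finally have c1: "\<alpha> - cnj \<alpha> - 2 * cnj \<beta> * p = 0" .
  have "(cnj \<beta> * p + \<beta> * cnj p) * p = 0" using s1 by simp
  then have c2: "\<beta> + cnj \<beta> * p\<^sup>2 = 0"
    using pp by (simp add: algebra_simps power2_eq_square)
  have "\<alpha> * z + \<beta> - z * (cnj \<beta> * z + cnj \<alpha>) + cnj \<beta> * (z - p)\<^sup>2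
      = (\<alpha> - cnj \<alpha> - 2 * cnj \<beta> * p) * z + (\<beta> + cnj \<beta> * p\<^sup>2)"
    by (simp add: algebra_simps power2_eq_square)
  also have "\<dots> = 0" using c1 c2 by simp
  finally show ?thesis by (simp add: algebra_simps)
qed

lemma parab_disp:
  assumes det: "(cmod \<alpha>)\<^sup>2 - (cmod \<beta>)\<^sup>2 = 1" and z: "cmod z < 1"
    and Q: "\<alpha> * z + \<beta> - z * (cnj \<beta> * z + cnj \<alpha>) = - cnj \<beta> * (z - p)\<^sup>2"
  shows "hdist z (mob \<alpha> \<beta> z) = (cmod \<beta>)\<^sup>2 * (cmod (z - p))^4 / (1 - (cmod z)\<^sup>2)\<^sup>2"
proof -
  let ?D = "cnj \<beta> * z + cnj \<alpha>"
  have Dnz: "?D \<noteq> 0" using denom_nz[OF det] z by simp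
  have Dp: "cmod ?D > 0" using Dnz by simp
  have z1: "1 - (cmod z)\<^sup>2 > 0" using z by (simp add: abs_square_less_1)
  have "z - mob \<alpha> \<beta> z = (z * ?D - (\<alpha> * z + \<beta>)) / ?D" unfolding mob_def using Dnz by (simp add: field_simps)
  also have "z * ?D - (\<alpha> * z + \<beta>) = cnj \<beta> * (z - p)\<^sup>2" using Q by (simp add: algebra_simps)
  finally have e1: "(cmod (z - mob \<alpha> \<beta> z))\<^sup>2 = (cmod \<beta>)\<^sup>2 * (cmod (z - p))^4 / (cmod ?D)\<^sup>2"
    by (simp add: norm_divide norm_mult norm_power power_divide power_mult_distrib flip: power_mult)
  have e2: "1 - (cmod (mob \<alpha> \<beta> z))\<^sup>2 = (1 - (cmod z)\<^sup>2) / (cmod ?D)\<^sup>2"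
    by (rule mob_one_minus[OF det less_imp_le[OF z]])
  have "hdist z (mob \<alpha> \<beta> z) = ((cmod \<beta>)\<^sup>2 * (cmod (z - p))^4 / (cmod ?D)\<^sup>2) / ((1 - (cmod z)\<^sup>2) * ((1 - (cmod z)\<^sup>2) / (cmod ?D)\<^sup>2))"
    unfolding hdist_def e1 e2 ..
  also have "\<dots> = (cmod \<beta>)\<^sup>2 * (cmod (z - p))^4 / (1 - (cmod z)\<^sup>2)\<^sup>2"
    using Dp z1 by (simp add: field_simps power2_eq_square)
  finally show ?thesis .
qed

lemma small_disp:
  assumes det: "(cmod \<alpha>)\<^sup>2 - (cmod \<beta>)\<^sup>2 = 1" and p: "cmod p = 1"
    and Q: "\<And>z. \<alpha> * z + \<beta> - z * (cnj \<beta> * z + cnj \<alpha>) = - cnj \<beta> * (z - p)\<^sup>2"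
    and e: "\<epsilon> > 0"
  shows "\<exists>z. cmod z < 1 \<and> hdist z (mob \<alpha> \<beta> z) < \<epsilon>"
proof -
  define B where "B = (cmod \<beta>)\<^sup>2"
  have B0: "B \<ge> 0" unfolding B_def by simp
  define \<eta> where "\<eta> = min (1/2) (\<epsilon> / (B + 1))"
  have \<eta>0: "\<eta> > 0" unfolding \<eta>_def using e B0 by simp
  have \<eta>1: "\<eta> \<le> 1/2" unfolding \<eta>_def by (rule min.cobounded1)
  have \<eta>e: "\<eta> * (B + 1) \<le> \<epsilon>" unfolding \<eta>_def using B0 e
    by (metis min.cobounded2 pos_le_divide_eq add_nonneg_pos zero_less_one)
  define t where "t = 1 - \<eta>"
  define z where "z = complex_of_real t * p"
  have t0: "0 < t" "t < 1" unfolding t_def using \<eta>0 \<eta>1 by auto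
  have zn: "cmod z = t" unfolding z_def using p t0 by (simp add: norm_mult)
  have z: "cmod z < 1" using zn t0 by simp
  have zp: "cmod (z - p) = \<eta>"
  proof -
    have "z - p = complex_of_real (- \<eta>) * p" unfolding z_def t_def by (simp add: algebra_simps)
    then show ?thesis using p \<eta>0 by (simp add: norm_mult)
  qed
  have den: "1 - (cmod z)\<^sup>2 \<ge> \<eta>" unfolding zn t_def using \<eta>0 \<eta>1 by (simp add: power2_eq_square algebra_simps)
  have "hdist z (mob \<alpha> \<beta> z) = B * \<eta>^4 / (1 - (cmod z)\<^sup>2)\<^sup>2"
    using parab_disp[OF det z Q] zp B_def by simp
  also have "\<dots> \<le> B * \<eta>^4 / \<eta>\<^sup>2"
    using den \<eta>0 B0 by (intro divide_left_mono mult_nonneg_nonneg power_mono) auto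
  also have "\<dots> = B * \<eta>\<^sup>2" using \<eta>0 by (simp add: power2_eq_square power4_eq_xxxx)
  also have "\<dots> \<le> B * \<eta>" using \<eta>0 \<eta>1 B0 by (intro mult_left_mono) (auto simp: power2_eq_square)
  also have "\<dots> < \<eta> * (B + 1)" using \<eta>0 by (simp add: algebra_simps)
  also have "\<dots> \<le> \<epsilon>" by (rule \<eta>e)
  finally show ?thesis using z by blast
qed

lemma coef_bound:
  assumes det: "(cmod a)\<^sup>2 - (cmod b)\<^sup>2 = 1" and r0: "0 \<le> r" and r1: "r < 1"
    and k: "cmod k \<le> r" and hdk: "hdist k (mob a b k) \<le> 1"
  shows "cmod a \<le> 3 / (1 - r)\<^sup>2"
proof -
  define s where "s = 1 - r"
  have s0: "0 < s" "s \<le> 1" unfolding s_def using r0 r1 by auto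
  have kb: "cmod k < 1" using k r1 by simp
  define w where "w = mob a b k"
  define \<rho> where "\<rho> = cmod w"
  have \<rho>1: "\<rho> < 1" unfolding \<rho>_def w_def by (rule mob_ball[OF det kb])
  have \<rho>0: "0 \<le> \<rho>" unfolding \<rho>_def by simp
  define A where "A = 1 - (cmod k)\<^sup>2"
  define B where "B = 1 - \<rho>\<^sup>2"
  have A0: "0 < A" "A \<le> 1" unfolding A_def using kb by (auto simp: abs_square_less_1)
  have B0: "0 < B" unfolding B_def using \<rho>1 \<rho>0 by (simp add: abs_square_less_1)
  have "(cmod (k - w))\<^sup>2 / (A * B) \<le> 1" using hdk unfolding hdist_def A_def B_def \<rho>_def w_def .
  then have "(cmod (k - w))\<^sup>2 \<le> A * B" using A0 B0 by (simp add: divide_le_eq)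
  also have "\<dots> \<le> B" using A0 B0 by (simp add: mult_le_cancel_right1)
  finally have kw: "(cmod (k - w))\<^sup>2 \<le> B" .
  have sq: "0 \<le> (1 - \<rho>) * (1 - \<rho>)" by simp
  have B2: "B \<le> 2 * (1 - \<rho>)" unfolding B_def using sq by (simp add: power2_eq_square algebra_simps)
  have L: "s\<^sup>2 / 8 \<le> 1 - \<rho>"
  proof (cases "\<rho> \<le> (1 + r) / 2")
    case True
    then have "s / 2 \<le> 1 - \<rho>" unfolding s_def by simp
    moreover have "s\<^sup>2 / 8 \<le> s / 2" using s0 by (simp add: power2_eq_square mult_le_cancel_left1)
    ultimately show ?thesis by simp
  next
    case False
    have "\<rho> - r \<le> cmod (k - w)"
    proof -
      have "cmod w - cmod k \<le> cmod (k - w)" by (metis norm_minus_commute norm_triangle_ineq2)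
      then show ?thesis using k unfolding \<rho>_def by simp
    qed
    moreover have "s / 2 < \<rho> - r" using False unfolding s_def by simp
    ultimately have "s / 2 < cmod (k - w)" by simp
    then have "(s / 2)\<^sup>2 < (cmod (k - w))\<^sup>2" using s0 by (intro power_strict_mono) auto
    then have "s\<^sup>2 / 4 < 2 * (1 - \<rho>)" using kw B2 by (simp add: power_divide)
    then show ?thesis by simp
  qed
  let ?D = "cnj b * k + cnj a"
  have Dn: "cmod ?D > 0" using denom_nz[OF det less_imp_le[OF kb]] by simp
  have "B = A / (cmod ?D)\<^sup>2" unfolding B_def \<rho>_def w_def A_def by (rule mob_one_minus[OF det less_imp_le[OF kb]])
  then have "B * (cmod ?D)\<^sup>2 = A" using Dn by (simp add: field_simps)
  then have D2: "(cmod ?D)\<^sup>2 = A / B" using B0 by (simp add: eq_divide_eq mult.commute)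
  also have "\<dots> \<le> 1 / B" using A0 B0 by (simp add: divide_right_mono)
  also have "\<dots> \<le> 1 / (1 - \<rho>)" using B2 B0 \<rho>1
  proof -
    have "\<rho> * \<rho> \<le> \<rho> * 1" using \<rho>0 \<rho>1 by (intro mult_left_mono) auto
    then have "1 - \<rho> \<le> B" unfolding B_def by (simp add: power2_eq_square)
    then show ?thesis using \<rho>1 by (simp add: frac_le)
  qed
  also have "\<dots> \<le> 1 / (s\<^sup>2 / 8)" using L s0 \<rho>1 by (intro divide_left_mono) (auto simp: zero_less_mult_iff)
  also have "\<dots> = 8 / s\<^sup>2" by simp
  finally have Dup: "(cmod ?D)\<^sup>2 \<le> 8 / s\<^sup>2" .
  have ab: "cmod b \<le> cmod a" using a_gt_b[OF det] by simp
  have "cmod a * s \<le> cmod a - cmod b * r" unfolding s_def using mult_left_mono[OF ab r0] by (simp add: algebra_simps)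
  also have "\<dots> \<le> cmod ?D" by (rule denom_lower[OF det k])
  finally have lo: "cmod a * s \<le> cmod ?D" .
  have "(cmod a * s)\<^sup>2 \<le> (cmod ?D)\<^sup>2" using lo s0 by (intro power_mono) auto
  also have "\<dots> \<le> 8 / s\<^sup>2" by (rule Dup)
  finally have "(cmod a)\<^sup>2 * s\<^sup>2 \<le> 8 / s\<^sup>2" by (simp add: power_mult_distrib)
  moreover have sp: "0 < s\<^sup>2" using s0 by simp
  ultimately have "(cmod a)\<^sup>2 \<le> (8 / s\<^sup>2) / s\<^sup>2" using pos_le_divide_eq[OF sp] by blast
  also have "\<dots> = 8 / (s\<^sup>2)\<^sup>2" by (simp only: divide_divide_eq_left power2_eq_square[of "s\<^sup>2"])
  also have "\<dots> \<le> 9 / (s\<^sup>2)\<^sup>2" using s0 by (intro divide_right_mono) auto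
  also have "\<dots> = (3 / s\<^sup>2)\<^sup>2" by (simp add: power_divide)
  finally have "(cmod a)\<^sup>2 \<le> (3 / s\<^sup>2)\<^sup>2" .
  moreover have "0 \<le> 3 / s\<^sup>2" using s0 by simp
  ultimately have "cmod a \<le> 3 / s\<^sup>2" by (rule power2_le_imp_le)
  then show ?thesis unfolding s_def .
qed

context hyp begin

lemma attD: assumes "attracting_fp f p"
  shows "cmod p = 1" "f p = p" "\<And>z. cmod z < 1 \<Longrightarrow> (\<lambda>k. (f ^^ k) z) \<longlonglongrightarrow> p"
  using assms unfolding attracting_fp_def by auto

lemma attr_ge:
  assumes x: "x \<in> carrier G" and m: "is_mob \<alpha> \<beta> (h x)" and att: "attracting_fp (h x) p"
  shows "1 \<le> cmod (cnj \<beta> * p + cnj \<alpha>)"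
proof (rule ccontr)
  assume "\<not> 1 \<le> cmod (cnj \<beta> * p + cnj \<alpha>)"
  then have Dp: "cmod (cnj \<beta> * p + cnj \<alpha>) < 1" by simp
  have det: "(cmod \<alpha>)\<^sup>2 - (cmod \<beta>)\<^sup>2 = 1" by (rule is_mobD(1)[OF m])
  have p1: "cmod p = 1" by (rule attD(1)[OF att])
  have pfix: "mob \<alpha> \<beta> p = p" using attD(2)[OF att] is_mobD(2)[OF m, of p] p1 by simp
  define w where "w k = (h x ^^ k) 0" for k
  have wb: "cmod (w k) < 1" for k unfolding w_def by (rule hpow_ball[OF x]) simp
  have lim: "w \<longlonglongrightarrow> p" unfolding w_def by (rule attD(3)[OF att]) simp
  define Df where "Df z = cnj \<beta> * z + cnj \<alpha>" for z
  have "(\<lambda>k. cmod (Df (w k)) * cmod (Df p)) \<longlonglongrightarrow> cmod (Df p) * cmod (Df p)"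
    unfolding Df_def by (intro tendsto_intros lim)
  moreover have "cmod (Df p) * cmod (Df p) < 1"
  proof -
    have "cmod (Df p) * cmod (Df p) \<le> cmod (Df p)" using Dp unfolding Df_def by (intro mult_left_le_one_le) auto
    then show ?thesis using Dp unfolding Df_def by simp
  qed
  ultimately have ev: "eventually (\<lambda>k. cmod (Df (w k)) * cmod (Df p) < 1) sequentially"
    by (rule order_tendstoD(2))
  have "eventually (\<lambda>k. cmod (w k - p) \<le> cmod (w (Suc k) - p)) sequentially"
  proof (rule eventually_mono[OF ev])
    fix k assume c1: "cmod (Df (w k)) * cmod (Df p) < 1"
    have wk: "cmod (w k) \<le> 1" using wb[of k] by simp
    have ws: "w (Suc k) = mob \<alpha> \<beta> (w k)" unfolding w_def using is_mobD(2)[OF m wk[unfolded w_def]] by simp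
    have "w (Suc k) - p = mob \<alpha> \<beta> (w k) - mob \<alpha> \<beta> p" using ws pfix by simp
    also have "\<dots> = (w k - p) / (Df (w k) * Df p)" unfolding Df_def by (rule mob_diff[OF det wk]) (simp add: p1)
    finally have e: "cmod (w (Suc k) - p) = cmod (w k - p) / (cmod (Df (w k)) * cmod (Df p))"
      by (simp add: norm_divide norm_mult)
    have pos: "0 < cmod (Df (w k)) * cmod (Df p)"
      using denom_nz[OF det wk] denom_nz[OF det, of p] p1 unfolding Df_def by simp
    have "cmod (w k - p) * (cmod (Df (w k)) * cmod (Df p)) \<le> cmod (w k - p)"
      using c1 by (simp add: mult_left_le)
    then show "cmod (w k - p) \<le> cmod (w (Suc k) - p)" unfolding e using pos by (simp add: le_divide_eq)
  qed
  then show False by (rule no_repel[OF wb p1 lim])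
qed

lemma attr_le:
  assumes x: "x \<in> carrier G" and m: "is_mob \<alpha> \<beta> (h x)" and p1: "cmod p = 1" and pf: "h x p = p"
    and att: "attracting_fp (h (inv x)) p"
  shows "cmod (cnj \<beta> * p + cnj \<alpha>) \<le> 1"
proof (rule ccontr)
  assume "\<not> cmod (cnj \<beta> * p + cnj \<alpha>) \<le> 1"
  then have Dp: "1 < cmod (cnj \<beta> * p + cnj \<alpha>)" by simp
  have det: "(cmod \<alpha>)\<^sup>2 - (cmod \<beta>)\<^sup>2 = 1" by (rule is_mobD(1)[OF m])
  have pfix: "mob \<alpha> \<beta> p = p" using pf is_mobD(2)[OF m, of p] p1 by simp
  have xi: "inv x \<in> carrier G" using x by simp
  define u where "u k = (h (inv x) ^^ k) 0" for k
  have ub: "cmod (u k) < 1" for k unfolding u_def by (rule hpow_ball[OF xi]) simp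
  have lim: "u \<longlonglongrightarrow> p" unfolding u_def by (rule attD(3)[OF att]) simp
  have lim2: "(\<lambda>k. u (Suc k)) \<longlonglongrightarrow> p" using lim by (rule LIMSEQ_Suc)
  define Df where "Df z = cnj \<beta> * z + cnj \<alpha>" for z
  have "(\<lambda>k. cmod (Df (u (Suc k))) * cmod (Df p)) \<longlonglongrightarrow> cmod (Df p) * cmod (Df p)"
    unfolding Df_def by (intro tendsto_intros lim2)
  moreover have "1 < cmod (Df p) * cmod (Df p)"
  proof -
    have "cmod (Df p) * 1 < cmod (Df p) * cmod (Df p)" using Dp unfolding Df_def by (intro mult_strict_left_mono) auto
    then show ?thesis using Dp unfolding Df_def by simp
  qed
  ultimately have ev: "eventually (\<lambda>k. 1 < cmod (Df (u (Suc k))) * cmod (Df p)) sequentially"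
    by (rule order_tendstoD(1))
  have "eventually (\<lambda>k. cmod (u k - p) \<le> cmod (u (Suc k) - p)) sequentially"
  proof (rule eventually_mono[OF ev])
    fix k assume c1: "1 < cmod (Df (u (Suc k))) * cmod (Df p)"
    have uk: "cmod (u k) \<le> 1" using ub[of k] by simp
    have us: "cmod (u (Suc k)) \<le> 1" using ub[of "Suc k"] by simp
    have "u k = h x (u (Suc k))" unfolding u_def using hinv2[OF x uk[unfolded u_def]] by simp
    also have "\<dots> = mob \<alpha> \<beta> (u (Suc k))" using is_mobD(2)[OF m us] .
    finally have ws: "u k = mob \<alpha> \<beta> (u (Suc k))" .
    have "u k - p = mob \<alpha> \<beta> (u (Suc k)) - mob \<alpha> \<beta> p" using ws pfix by simp
    also have "\<dots> = (u (Suc k) - p) / (Df (u (Suc k)) * Df p)" unfolding Df_def by (rule mob_diff[OF det us]) (simp add: p1)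
    finally have e: "cmod (u k - p) = cmod (u (Suc k) - p) / (cmod (Df (u (Suc k))) * cmod (Df p))"
      by (simp add: norm_divide norm_mult)
    have "cmod (u (Suc k) - p) \<le> cmod (u (Suc k) - p) * (cmod (Df (u (Suc k))) * cmod (Df p))"
      using c1 by (simp add: mult_le_cancel_left1)
    then show "cmod (u k - p) \<le> cmod (u (Suc k) - p)" unfolding e using c1 by (simp add: divide_le_eq)
  qed
  then show False by (rule no_repel[OF ub p1 lim])
qed

end

lemma fix_from_seq:
  assumes det: "(cmod a)\<^sup>2 - (cmod b)\<^sup>2 = 1" and kl: "kk \<longlonglongrightarrow> ks" and ksb: "cmod ks < 1"
    and kb: "\<And>m. cmod (kk m) < 1"
    and ev: "\<And>m. m \<ge> N \<Longrightarrow> hdist (kk m) (mob a b (kk m)) < 1 / (real m + 1)"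
  shows "mob a b ks = ks"
proof -
  define g where "g m = kk m - mob a b (kk m)" for m
  have gsq: "(cmod (g m))\<^sup>2 \<le> hdist (kk m) (mob a b (kk m))" for m
  proof -
    define A where "A = 1 - (cmod (kk m))\<^sup>2"
    define B where "B = 1 - (cmod (mob a b (kk m)))\<^sup>2"
    have A0: "0 < A" "A \<le> 1" unfolding A_def using kb[of m] by (auto simp: abs_square_less_1)
    have B0: "0 < B" "B \<le> 1" unfolding B_def using mob_ball[OF det kb[of m]] by (auto simp: abs_square_less_1)
    have AB: "0 < A * B" "A * B \<le> 1" using A0 B0 by (auto simp: mult_le_one)
    have "hdist (kk m) (mob a b (kk m)) = (cmod (g m))\<^sup>2 / (A * B)" unfolding hdist_def g_def A_def B_def ..
    moreover have "(cmod (g m))\<^sup>2 \<le> (cmod (g m))\<^sup>2 / (A * B)" using AB by (simp add: le_divide_eq mult_left_le)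
    ultimately show ?thesis by simp
  qed
  have g0: "g \<longlonglongrightarrow> 0"
  proof (rule LIMSEQ_I)
    fix r :: real assume r: "0 < r"
    obtain M :: nat where M: "1 / r\<^sup>2 < real M" using reals_Archimedean2 by blast
    have "\<forall>m\<ge>max N M. norm (g m - 0) < r"
    proof (intro allI impI)
      fix m assume m: "max N M \<le> m"
      have "(cmod (g m))\<^sup>2 < 1 / (real m + 1)" using gsq[of m] ev[of m] m by simp
      also have "\<dots> \<le> 1 / (real M + 1)" using m by (intro divide_left_mono) auto
      also have "\<dots> < r\<^sup>2"
      proof -
        have "1 < r\<^sup>2 * real M" using M r by (simp add: divide_less_eq mult.commute)
        then have "1 < r\<^sup>2 * (real M + 1)" using r by (simp add: algebra_simps add_strict_increasing)
        then show ?thesis by (simp add: divide_less_eq mult.commute)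
      qed
      finally have "(cmod (g m))\<^sup>2 < r\<^sup>2" .
      then show "norm (g m - 0) < r" using r by (simp add: power_less_imp_less_base)
    qed
    then show "\<exists>no. \<forall>m\<ge>no. norm (g m - 0) < r" by blast
  qed
  have Dn: "cnj b * ks + cnj a \<noteq> 0" using denom_nz[OF det] ksb by simp
  have "g \<longlonglongrightarrow> ks - mob a b ks" unfolding g_def mob_def by (intro tendsto_intros kl Dn)
  then have "ks - mob a b ks = 0" using g0 by (rule LIMSEQ_unique)
  then show ?thesis by simp
qed

lemma close_to_id:
  assumes det: "(cmod aN)\<^sup>2 - (cmod bN)\<^sup>2 = 1" and CaN: "cmod aN \<le> C" and CbN: "cmod bN \<le> C"
    and da: "cmod (am - aN) \<le> e" and db: "cmod (bm - bN) \<le> e"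
  shows "cmod (cnj aN * am + (- bN) * cnj bm - 1) \<le> 2 * C * e"
    and "cmod (cnj aN * bm + (- bN) * cnj am) \<le> 2 * C * e"
proof -
  have d: "aN * cnj aN - bN * cnj bN = 1" by (rule det_cpx[OF det])
  have C0: "0 \<le> C" using CaN norm_ge_zero order_trans by blast
  have "cnj aN * am + (- bN) * cnj bm - 1 = cnj aN * (am - aN) - bN * cnj (bm - bN)"
    using d by (simp add: algebra_simps)
  then have "cmod (cnj aN * am + (- bN) * cnj bm - 1) \<le> cmod aN * cmod (am - aN) + cmod bN * cmod (bm - bN)"
    by (metis norm_triangle_ineq4 norm_mult complex_mod_cnj)
  also have "\<dots> \<le> C * e + C * e" using CaN CbN da db C0 by (intro add_mono mult_mono) auto
  finally show "cmod (cnj aN * am + (- bN) * cnj bm - 1) \<le> 2 * C * e" by simp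
  have "cnj aN * bm + (- bN) * cnj am = cnj aN * (bm - bN) - bN * cnj (am - aN)"
    by (simp add: algebra_simps)
  then have "cmod (cnj aN * bm + (- bN) * cnj am) \<le> cmod aN * cmod (bm - bN) + cmod bN * cmod (am - aN)"
    by (metis norm_triangle_ineq4 norm_mult complex_mod_cnj)
  also have "\<dots> \<le> C * e + C * e" using CaN CbN da db C0 by (intro add_mono mult_mono) auto
  finally show "cmod (cnj aN * bm + (- bN) * cnj am) \<le> 2 * C * e" by simp
qed

context hyp begin

lemma conj_eq: assumes x: "x \<in> carrier G" and y: "y \<in> carrier G"
  shows "y \<otimes> (inv y \<otimes> x \<otimes> y) = x \<otimes> y"
proof -
  have 1: "inv y \<otimes> x \<otimes> y = inv y \<otimes> (x \<otimes> y)" by (rule m_assoc) (use x y in simp_all)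
  have 2: "y \<otimes> (inv y \<otimes> (x \<otimes> y)) = y \<otimes> inv y \<otimes> (x \<otimes> y)" by (rule m_assoc[symmetric]) (use x y in simp_all)
  show ?thesis unfolding 1 2 using x y by simp
qed

lemma noparab:
  assumes x: "x \<in> carrier G" and att: "attracting_fp (h x) p" and atti: "attracting_fp (h (inv x)) p"
  shows False
proof -
  obtain \<alpha> \<beta> where m: "is_mob \<alpha> \<beta> (h x)" using hm[OF x] by blast
  have det: "(cmod \<alpha>)\<^sup>2 - (cmod \<beta>)\<^sup>2 = 1" by (rule is_mobD(1)[OF m])
  have p1: "cmod p = 1" by (rule attD(1)[OF att])
  have pf: "h x p = p" by (rule attD(2)[OF att])
  have D1: "cmod (cnj \<beta> * p + cnj \<alpha>) = 1" using attr_ge[OF x m att] attr_le[OF x m p1 pf atti] by simp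
  have pfix: "mob \<alpha> \<beta> p = p" using pf is_mobD(2)[OF m, of p] p1 by simp
  have Q: "\<And>z. \<alpha> * z + \<beta> - z * (cnj \<beta> * z + cnj \<alpha>) = - cnj \<beta> * (z - p)\<^sup>2"
    by (rule parab_identity[OF p1 det D1 pfix])
  obtain K where K: "compact K" "K \<subseteq> ball 0 1" "\<forall>z\<in>ball 0 1. \<exists>y\<in>carrier G. \<exists>k\<in>K. z = h y k"
    using cocompact by blast
  have Kne: "K \<noteq> {}"
  proof -
    have "(0::complex) \<in> ball 0 1" by simp
    then obtain yy kk where "kk \<in> K" using K(3) by blast
    then show ?thesis by blast
  qed
  have cn: "continuous_on K (\<lambda>z::complex. norm z)" by (intro continuous_intros)
  obtain k0 where k0: "k0 \<in> K" "\<forall>k\<in>K. cmod k \<le> cmod k0"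
    using continuous_attains_sup[OF K(1) Kne cn] by blast
  define r where "r = cmod k0"
  have r0: "0 \<le> r" unfolding r_def by simp
  have r1: "r < 1" unfolding r_def using k0(1) K(2) by auto
  have kr: "\<And>k. k \<in> K \<Longrightarrow> cmod k \<le> r" using k0(2) unfolding r_def by blast
  have Kb: "\<And>k. k \<in> K \<Longrightarrow> cmod k < 1" using K(2) by auto
  define C where "C = 3 / (1 - r)\<^sup>2"
  have Cpos: "C > 0" unfolding C_def using r1 by simp
  have "\<forall>n. \<exists>z. cmod z < 1 \<and> hdist z (mob \<alpha> \<beta> z) < 1 / (real n + 1)"
  proof
    fix n :: nat
    show "\<exists>z. cmod z < 1 \<and> hdist z (mob \<alpha> \<beta> z) < 1 / (real n + 1)"
      by (rule small_disp[OF det p1 Q]) simp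
  qed
  then obtain z where z: "\<And>n. cmod (z n) < 1" "\<And>n. hdist (z n) (mob \<alpha> \<beta> (z n)) < 1 / (real n + 1)"
    by metis
  have "\<forall>n. \<exists>yk. fst yk \<in> carrier G \<and> snd yk \<in> K \<and> z n = h (fst yk) (snd yk)"
  proof
    fix n
    have "z n \<in> ball 0 1" using z(1)[of n] by simp
    then obtain yy kk where "yy \<in> carrier G" "kk \<in> K" "z n = h yy kk" using K(3) by blast
    then show "\<exists>yk. fst yk \<in> carrier G \<and> snd yk \<in> K \<and> z n = h (fst yk) (snd yk)"
      by (intro exI[of _ "(yy, kk)"]) simp
  qed
  then obtain yk where yk: "\<And>n. fst (yk n) \<in> carrier G" "\<And>n. snd (yk n) \<in> K" "\<And>n. z n = h (fst (yk n)) (snd (yk n))"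
    by metis
  define y where "y n = fst (yk n)" for n
  define kk where "kk n = snd (yk n)" for n
  have yc: "\<And>n. y n \<in> carrier G" and kK: "\<And>n. kk n \<in> K" and zy: "\<And>n. z n = h (y n) (kk n)"
    using yk unfolding y_def kk_def by auto
  define e where "e n = inv (y n) \<otimes> x \<otimes> y n" for n
  have ec: "\<And>n. e n \<in> carrier G" unfolding e_def using yc x by simp
  have hde: "hdist (kk n) (h (e n) (kk n)) < 1 / (real n + 1)" for n
  proof -
    have kb: "cmod (kk n) \<le> 1" using Kb[OF kK[of n]] by simp
    have zb: "cmod (z n) \<le> 1" using z(1)[of n] by simp
    have he: "h (e n) (kk n) = h (inv (y n)) (h x (z n))"
      unfolding e_def zy using hmul[OF m_closed[OF inv_closed[OF yc] x] yc kb]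
        hmul[OF inv_closed[OF yc] x hcb[OF yc kb]] by simp
    have ki: "kk n = h (inv (y n)) (z n)" unfolding zy using hinv1[OF yc kb] by simp
    obtain c d where cd: "is_mob c d (h (inv (y n)))" using hm[OF inv_closed[OF yc]] by blast
    have fz: "h x (z n) = mob \<alpha> \<beta> (z n)" using is_mobD(2)[OF m zb] .
    have fzb: "cmod (mob \<alpha> \<beta> (z n)) < 1" by (rule mob_ball[OF det z(1)])
    have "hdist (kk n) (h (e n) (kk n)) = hdist (kk n) (h (inv (y n)) (h x (z n)))" by (simp only: he)
    also have "\<dots> = hdist (h (inv (y n)) (z n)) (h (inv (y n)) (h x (z n)))" unfolding ki ..
    also have "\<dots> = hdist (mob c d (z n)) (mob c d (mob \<alpha> \<beta> (z n)))"
      unfolding fz using is_mobD(2)[OF cd] zb fzb by simp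
    also have "\<dots> = hdist (z n) (mob \<alpha> \<beta> (z n))" by (rule hd_inv[OF is_mobD(1)[OF cd] z(1) fzb])
    finally show ?thesis using z(2)[of n] by simp
  qed
  have "\<forall>n. \<exists>ab. is_mob (fst ab) (snd ab) (h (e n))"
    using hm[OF ec] by simp
  then obtain ab where ab0: "\<And>n. is_mob (fst (ab n)) (snd (ab n)) (h (e n))" by metis
  define a where "a n = fst (ab n)" for n
  define b where "b n = snd (ab n)" for n
  have ab: "\<And>n. is_mob (a n) (b n) (h (e n))" using ab0 unfolding a_def b_def by simp
  have detn: "\<And>n. (cmod (a n))\<^sup>2 - (cmod (b n))\<^sup>2 = 1" using is_mobD(1)[OF ab] .
  have hek: "h (e n) (kk n) = mob (a n) (b n) (kk n)" for n
    using is_mobD(2)[OF ab] Kb[OF kK[of n]] by simp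
  have aC: "cmod (a n) \<le> C" for n
  proof -
    have "hdist (kk n) (mob (a n) (b n) (kk n)) \<le> 1"
    proof -
      have h1: "hdist (kk n) (mob (a n) (b n) (kk n)) < 1 / (real n + 1)" using hde[of n] hek[of n] by simp
      have h2: "1 / (real n + 1) \<le> 1" by simp
      show ?thesis using h1 h2 by linarith
    qed
    then show ?thesis unfolding C_def by (rule coef_bound[OF detn r0 r1 kr[OF kK]])
  qed
  have bC: "cmod (b n) \<le> C" for n using a_gt_b[OF detn[of n]] aC[of n] by simp
  define S where "S = (cball (0::complex) C \<times> cball (0::complex) C) \<times> K"
  have cS: "compact S" unfolding S_def by (intro compact_Times compact_cball K(1))
  define s where "s n = ((a n, b n), kk n)" for n
  have sS: "\<forall>n. s n \<in> S" unfolding S_def s_def using aC bC kK by simp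
  obtain l \<sigma> where l: "l \<in> S" "strict_mono \<sigma>" "(s \<circ> \<sigma>) \<longlonglongrightarrow> l"
    using seq_compactE[OF compact_imp_seq_compact[OF cS] sS] by blast
  define as where "as = fst (fst l)"
  define bs where "bs = snd (fst l)"
  define ks where "ks = snd l"
  have al: "(\<lambda>n. a (\<sigma> n)) \<longlonglongrightarrow> as"
    using tendsto_fst[OF tendsto_fst[OF l(3)]] unfolding as_def s_def by (simp add: o_def)
  have bl: "(\<lambda>n. b (\<sigma> n)) \<longlonglongrightarrow> bs"
    using tendsto_snd[OF tendsto_fst[OF l(3)]] unfolding bs_def s_def by (simp add: o_def)
  have kl: "(\<lambda>n. kk (\<sigma> n)) \<longlonglongrightarrow> ks"
    using tendsto_snd[OF l(3)] unfolding ks_def s_def by (simp add: o_def)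
  have ksK: "ks \<in> K" using l(1) unfolding ks_def S_def by auto
  obtain \<epsilon>0 where e0: "\<epsilon>0 > 0" and disc: "\<forall>x\<in>carrier G. \<forall>\<alpha> \<beta>. is_mob \<alpha> \<beta> (h x) \<and> cmod (\<alpha> - 1) < \<epsilon>0 \<and> cmod \<beta> < \<epsilon>0
         \<longrightarrow> (\<forall>z\<in>cball 0 1. h x z = z)"
    using discrete by blast
  define \<eta> where "\<eta> = \<epsilon>0 / (8 * C)"
  have \<eta>0: "\<eta> > 0" unfolding \<eta>_def using e0 Cpos by simp
  have \<eta>C: "2 * C * (2 * \<eta>) < \<epsilon>0" unfolding \<eta>_def using e0 Cpos by (simp add: field_simps)
  obtain Na where Na: "\<And>n. n \<ge> Na \<Longrightarrow> cmod (a (\<sigma> n) - as) < \<eta>"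
    using al \<eta>0 unfolding LIMSEQ_iff by blast
  obtain Nb where Nb: "\<And>n. n \<ge> Nb \<Longrightarrow> cmod (b (\<sigma> n) - bs) < \<eta>"
    using bl \<eta>0 unfolding LIMSEQ_iff by blast
  define N where "N = max Na Nb"
  define e0' where "e0' = e (\<sigma> N)"
  have same: "e (\<sigma> n) = e0'" if n: "n \<ge> N" for n
  proof -
    have d1: "cmod (a (\<sigma> n) - a (\<sigma> N)) \<le> 2 * \<eta>"
    proof -
      have "cmod (a (\<sigma> n) - a (\<sigma> N)) \<le> cmod (a (\<sigma> n) - as) + cmod (a (\<sigma> N) - as)"
        by (metis norm_diff_triangle_le norm_minus_commute order_refl)
      then show ?thesis using Na[of n] Na[of N] n unfolding N_def by simp
    qed
    have d2: "cmod (b (\<sigma> n) - b (\<sigma> N)) \<le> 2 * \<eta>"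
    proof -
      have "cmod (b (\<sigma> n) - b (\<sigma> N)) \<le> cmod (b (\<sigma> n) - bs) + cmod (b (\<sigma> N) - bs)"
        by (metis norm_diff_triangle_le norm_minus_commute order_refl)
      then show ?thesis using Nb[of n] Nb[of N] n unfolding N_def by simp
    qed
    define g where "g = inv (e (\<sigma> N)) \<otimes> e (\<sigma> n)"
    have gc: "g \<in> carrier G" unfolding g_def using ec by simp
    define A where "A = cnj (a (\<sigma> N)) * a (\<sigma> n) + (- b (\<sigma> N)) * cnj (b (\<sigma> n))"
    define B where "B = cnj (a (\<sigma> N)) * b (\<sigma> n) + (- b (\<sigma> N)) * cnj (a (\<sigma> n))"
    have mg: "is_mob A B (h g)" unfolding g_def A_def B_def
      by (rule hcomp_mob[OF inv_closed[OF ec] ec hinv_mob[OF ec ab] ab])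
    have cA: "cmod (A - 1) \<le> 2 * C * (2 * \<eta>)" unfolding A_def
      by (rule close_to_id(1)[OF detn aC bC d1 d2])
    have cB: "cmod B \<le> 2 * C * (2 * \<eta>)" unfolding B_def
      by (rule close_to_id(2)[OF detn aC bC d1 d2])
    have "\<forall>z\<in>cball 0 1. h g z = z" using disc gc mg cA cB \<eta>C by fastforce
    then have "g = \<one>" using faithful[OF gc] by simp
    then have "e (\<sigma> N) \<otimes> g = e (\<sigma> N)" using ec by simp
    moreover have "e (\<sigma> N) \<otimes> g = e (\<sigma> n)" unfolding g_def using ec by (simp add: m_assoc[symmetric])
    ultimately show ?thesis unfolding e0'_def by simp
  qed
  have mob0: "h e0' w = mob (a (\<sigma> N)) (b (\<sigma> N)) w" if "cmod w \<le> 1" for w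
    unfolding e0'_def using is_mobD(2)[OF ab that] .
  have ev: "hdist (kk (\<sigma> m)) (mob (a (\<sigma> N)) (b (\<sigma> N)) (kk (\<sigma> m))) < 1 / (real m + 1)" if m: "m \<ge> N" for m
  proof -
    have kb: "cmod (kk (\<sigma> m)) \<le> 1" using Kb[OF kK] by (simp add: less_imp_le)
    have "hdist (kk (\<sigma> m)) (mob (a (\<sigma> N)) (b (\<sigma> N)) (kk (\<sigma> m))) = hdist (kk (\<sigma> m)) (h (e (\<sigma> m)) (kk (\<sigma> m)))"
      using same[OF m] mob0[OF kb] by simp
    also have "\<dots> < 1 / (real (\<sigma> m) + 1)" by (rule hde)
    also have "\<dots> \<le> 1 / (real m + 1)" using strict_mono_imp_increasing[OF l(2), of m]
      by (intro divide_left_mono) auto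
    finally show ?thesis .
  qed
  have ksb: "cmod ks < 1" using Kb[OF ksK] .
  have fixk: "mob (a (\<sigma> N)) (b (\<sigma> N)) ks = ks"
    by (rule fix_from_seq[OF detn kl ksb, of N]) (use Kb[OF kK] ev in auto)
  have hks: "h e0' ks = ks" using mob0[of ks] ksb fixk by simp
  define y0 where "y0 = y (\<sigma> N)"
  have y0c: "y0 \<in> carrier G" unfolding y0_def by (rule yc)
  define zs where "zs = h y0 ks"
  have zsb: "cmod zs < 1" unfolding zs_def by (rule hb[OF y0c ksb])
  have kb1: "cmod ks \<le> 1" using ksb by simp
  have e0'_eq: "e0' = inv y0 \<otimes> x \<otimes> y0" unfolding e0'_def e_def y0_def ..
  have fzs: "h x zs = zs"
  proof -
    have "h x zs = h (x \<otimes> y0) ks" unfolding zs_def using hmul[OF x y0c kb1] by simp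
    also have "x \<otimes> y0 = y0 \<otimes> e0'" unfolding e0'_eq using conj_eq[OF x y0c] by simp
    also have "h (y0 \<otimes> e0') ks = h y0 (h e0' ks)" using hmul[OF y0c _ kb1] ec unfolding e0'_def by simp
    also have "\<dots> = zs" unfolding hks zs_def ..
    finally show ?thesis .
  qed
  have "(h x ^^ n) zs = zs" for n by (induction n) (use fzs in auto)
  then have "(\<lambda>n. zs) \<longlonglongrightarrow> p" using attD(3)[OF att zsb] by simp
  then have "zs = p" by (simp add: LIMSEQ_const_iff)
  then show False using zsb p1 by simp
qed

end

theorem lemma3p9:
  fixes G :: "'g monoid" and g :: nat and c :: "nat \<Rightarrow> 'g"
    and h :: "'g \<Rightarrow> complex \<Rightarrow> complex"
    and \<omega> :: "'v::euclidean_space \<Rightarrow> 'v \<Rightarrow> real" and n :: nat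
    and \<rho> :: "'g \<Rightarrow> 'v \<Rightarrow> 'v" and \<phi> :: "complex \<Rightarrow> 'v set"
    and \<gamma> :: 'g and gp gm :: complex
  assumes "symplectic_form \<omega>" and "DIM('v) = 2 * n"
    and "g \<ge> 2" and "surface_group G g c"
    and "hyperbolization G h"
    and "maximal_rep G g c \<omega> n \<rho>"
    and "boundary_map G h \<omega> \<rho> \<phi>"
    and "\<gamma> \<in> carrier G" and "\<gamma> \<noteq> \<one>\<^bsub>G\<^esub>"
    and "attracting_fp (h \<gamma>) gp"
    and "attracting_fp (h (inv\<^bsub>G\<^esub> \<gamma>)) gm"
  shows "translength \<omega> (\<rho> \<gamma>) =
         (INF J\<in>YSp \<omega> (\<phi> gm) (\<phi> gp). dSp \<omega> J (sp_act (\<rho> \<gamma>) J))"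
proof -
  note sf = assms(1) and sg = assms(4) and hy = assms(5) and mr = assms(6) and bm = assms(7)
    and gam = assms(8) and attp = assms(10) and attm = assms(11)
  have grp: "group G" using sg unfolding surface_group_def by blast
  interpret H: hyp G h by (rule hyp.intro[OF grp]) (rule hyp_axioms.intro[OF hy])
  interpret S: symp \<omega> by (rule symp.intro[OF sf])
  have gp1: "cmod gp = 1" by (rule H.attD(1)[OF attp])
  have gm1: "cmod gm = 1" by (rule H.attD(1)[OF attm])
  have hgp: "h \<gamma> gp = gp" by (rule H.attD(2)[OF attp])
  have hgm: "h (inv\<^bsub>G\<^esub> \<gamma>) gm = gm" by (rule H.attD(2)[OF attm])
  have ne: "gp \<noteq> gm"
  proof
    assume "gp = gm"
    then have "attracting_fp (h (inv\<^bsub>G\<^esub> \<gamma>)) gp" using attm by simp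
    then show False using H.noparab[OF gam attp] by blast
  qed
  have gpS: "gp \<in> sphere 0 1" using gp1 by simp
  have gmS: "gm \<in> sphere 0 1" using gm1 by simp
  have lag: "\<And>p. p \<in> sphere 0 1 \<Longrightarrow> lagrangian \<omega> (\<phi> p)" using bm unfolding boundary_map_def by blast
  have equi: "\<And>x p. x \<in> carrier G \<Longrightarrow> p \<in> sphere 0 1 \<Longrightarrow> \<phi> (h x p) = \<rho> x ` \<phi> p"
    using bm unfolding boundary_map_def by blast
  have trv: "transverse (\<phi> gp) (\<phi> gm)" using bm gpS gmS ne unfolding boundary_map_def by blast
  interpret P: pairL \<omega> "\<phi> gp" "\<phi> gm"
    by (rule pairL.intro[OF symp.intro[OF sf]]) (rule pairL_axioms.intro[OF lag[OF gpS] lag[OF gmS] trv])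
  have rep: "sp_rep G \<omega> \<rho>" using mr unfolding maximal_rep_def by blast
  have rSp: "\<And>x. x \<in> carrier G \<Longrightarrow> \<rho> x \<in> Sp \<omega>" using rep unfolding sp_rep_def by blast
  have rmul: "\<And>x y. x \<in> carrier G \<Longrightarrow> y \<in> carrier G \<Longrightarrow> \<rho> (x \<otimes>\<^bsub>G\<^esub> y) = \<rho> x \<circ> \<rho> y"
    using rep unfolding sp_rep_def by blast
  have one: "inv\<^bsub>G\<^esub> \<gamma> \<in> carrier G" using grp gam by (simp add: group.inv_closed)
  have onec: "\<one>\<^bsub>G\<^esub> \<in> carrier G" using grp by (simp add: monoid.one_closed group.is_monoid)
  have r1: "\<rho> \<one>\<^bsub>G\<^esub> v = v" for v
  proof -
    have "\<rho> \<one>\<^bsub>G\<^esub> = \<rho> \<one>\<^bsub>G\<^esub> \<circ> \<rho> \<one>\<^bsub>G\<^esub>" using rmul[OF onec onec] grp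
      by (simp add: monoid.l_one group.is_monoid onec)
    then have "\<rho> \<one>\<^bsub>G\<^esub> (\<rho> \<one>\<^bsub>G\<^esub> v) = \<rho> \<one>\<^bsub>G\<^esub> v" by (metis comp_apply)
    then show ?thesis using S.Sp_inj[OF rSp[OF onec]] by (simp add: inj_eq)
  qed
  have ep: "\<rho> \<gamma> ` \<phi> gp = \<phi> gp" using equi[OF gam gpS] hgp by simp
  have em0: "\<rho> (inv\<^bsub>G\<^esub> \<gamma>) ` \<phi> gm = \<phi> gm" using equi[OF one gmS] hgm by simp
  have "\<rho> \<gamma> ` \<phi> gm = \<rho> \<gamma> ` (\<rho> (inv\<^bsub>G\<^esub> \<gamma>) ` \<phi> gm)" using em0 by simp
  also have "\<dots> = \<rho> (\<gamma> \<otimes>\<^bsub>G\<^esub> inv\<^bsub>G\<^esub> \<gamma>) ` \<phi> gm" using rmul[OF gam one] by (simp add: image_comp)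
  also have "\<gamma> \<otimes>\<^bsub>G\<^esub> inv\<^bsub>G\<^esub> \<gamma> = \<one>\<^bsub>G\<^esub>" using grp gam by (simp add: group.r_inv)
  also have "\<rho> \<one>\<^bsub>G\<^esub> ` \<phi> gm = \<phi> gm" using r1 by simp
  finally have em: "\<rho> \<gamma> ` \<phi> gm = \<phi> gm" .
  show ?thesis by (rule P.partB[OF rSp[OF gam] ep em])
qed

end
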